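(* Let $D$ be a finite-dimensional division algebra over $\mathbb Q$ and $n\in\mathbb Z_{>0}$. Let $\Sigma$ be a non-trivial finitely generated abelian subgroup of ${\rm GL}_n(D)$ consisting of unipotent matrices, so that each $\alpha\in\Sigma$ is $\alpha=1+\eta_\alpha$ with $\eta_\alpha\in M_n(D)$ nilpotent. Let $\mathfrak k=\bigcap_{\alpha\in\Sigma}\ker\eta_\alpha\subseteq D^n$ and $k=\dim_D\mathfrak k$ (as a right $D$-vector space). Then ${\rm rk}_{\mathbb Z}\Sigma<n\cdot(n-k)\cdot[D:\mathbb Q]$.
   Context: $D^n$ is regarded as an $M_n(D)$–$D$-bimodule; dimensions over $D$ are of right $D$-vector spaces. ${\rm rk}_{\mathbb Z}$ is the torsion-free rank of an abelian group. *)

theory Defs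
  imports "HOL-Analysis.Analysis" "HOL-Algebra.FiniteProduct" "HOL-Algebra.Generated_Groups"
begin

text \<open>Scalar multiplication of a rational on an element of a ring of characteristic 0
  (the prime field of a division ring of characteristic 0 is Q, which is central).\<close>
definition rat_scale :: "rat \<Rightarrow> 'a::{division_ring,ring_char_0} \<Rightarrow> 'a" where
  "rat_scale q x = (of_int (fst (quotient_of q)) * inverse (of_int (snd (quotient_of q)))) * x"

definition fin_dim_over_Q :: "'a::{division_ring,ring_char_0} itself \<Rightarrow> bool" where
  "fin_dim_over_Q _ \<longleftrightarrow> (\<exists>B::'a set. finite B \<and> module.span rat_scale B = UNIV)"

definition degree_over_Q :: "'a::{division_ring,ring_char_0} itself \<Rightarrow> nat" where
  "degree_over_Q _ = vector_space.dim (rat_scale :: rat \<Rightarrow> 'a \<Rightarrow> 'a) UNIV"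

definition GL :: "('a::semiring_1^'n^'n) monoid" where
  "GL = \<lparr>carrier = {A. invertible A}, mult = (**), one = mat 1\<rparr>"

definition nilpotent_mat :: "'a::semiring_1^'n^'n \<Rightarrow> bool" where
  "nilpotent_mat N \<longleftrightarrow> (\<exists>m. (((**) N) ^^ m) (mat 1) = 0)"

definition unipotent_mat :: "'a::ring_1^'n^'n \<Rightarrow> bool" where
  "unipotent_mat A \<longleftrightarrow> nilpotent_mat (A - mat 1)"

definition right_indep :: "('a::ring_1^'n) set \<Rightarrow> bool" where
  "right_indep S \<longleftrightarrow> finite S \<and>
     (\<forall>c. (\<Sum>v\<in>S. (\<chi> i. v $ i * c v)) = 0 \<longrightarrow> (\<forall>v\<in>S. c v = 0))"

definition right_dim :: "('a::ring_1^'n) set \<Rightarrow> nat" where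
  "right_dim V = Sup {card S | S. S \<subseteq> V \<and> right_indep S}"

definition Z_indep :: "('g, 'b) monoid_scheme \<Rightarrow> 'g set \<Rightarrow> bool" where
  "Z_indep G S \<longleftrightarrow> finite S \<and> S \<subseteq> carrier G \<and>
     (\<forall>c::'g \<Rightarrow> int. finprod G (\<lambda>g. g [^]\<^bsub>G\<^esub> c g) S = \<one>\<^bsub>G\<^esub> \<longrightarrow> (\<forall>g\<in>S. c g = 0))"

definition rank_Z :: "('g, 'b) monoid_scheme \<Rightarrow> nat" where
  "rank_Z G = Sup {card S | S. Z_indep G S}"

end

theory Submission
  imports Defs "HOL-Computational_Algebra.Polynomial"
begin


definition cq :: "rat \<Rightarrow> 'a::{division_ring,ring_char_0}" where
  "cq q = of_int (fst (quotient_of q)) * inverse (of_int (snd (quotient_of q)))"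

lemma rat_scale_cq: "rat_scale q x = cq q * x"
  by (simp add: rat_scale_def cq_def)

lemma of_int_inv_commute:
  "inverse (of_int k :: 'a::{division_ring,ring_char_0}) * x = x * inverse (of_int k)"
proof (cases "k = 0")
  case True then show ?thesis by simp
next
  case False
  then have nz: "(of_int k :: 'a) \<noteq> 0" by simp
  have "inverse (of_int k) * x = inverse (of_int k) * (x * of_int k) * inverse (of_int k)"
    using nz by (simp add: mult.assoc)
  also have "\<dots> = inverse (of_int k) * (of_int k * x) * inverse (of_int k)"
    by (simp add: mult_of_int_commute)
  also have "\<dots> = x * inverse (of_int k)"
    using nz by (simp add: mult.assoc[symmetric])
  finally show ?thesis .
qed

lemma cq_central: "cq q * x = x * (cq q :: 'a::{division_ring,ring_char_0})"
proof -
  let ?a = "of_int (fst (quotient_of q)) :: 'a" and ?i = "inverse (of_int (snd (quotient_of q))) :: 'a"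
  have "?a * ?i * x = ?a * (x * ?i)" by (simp add: mult.assoc of_int_inv_commute)
  also have "\<dots> = (x * ?a) * ?i" by (simp add: mult.assoc[symmetric] mult_of_int_commute)
  finally show ?thesis by (simp add: cq_def mult.assoc)
qed

lemma cq_frac:
  assumes b: "b \<noteq> 0" and q: "q = of_int a / of_int b"
  shows "(cq q :: 'a::{division_ring,ring_char_0}) = of_int a * inverse (of_int b)"
proof -
  obtain a' b' where qo: "quotient_of q = (a', b')" by (cases "quotient_of q")
  then have b': "b' > 0" by (rule quotient_of_denom_pos)
  from qo have q': "q = of_int a' / of_int b'" by (rule quotient_of_div)
  from q q' b b' have "of_int a * of_int b' = (of_int a' * of_int b :: rat)"
    by (simp add: field_simps)
  then have eq: "a * b' = a' * b" by (metis of_int_eq_iff of_int_mult)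
  then have eqD: "(of_int a * of_int b' :: 'a) = of_int a' * of_int b"
    by (metis of_int_mult)
  have nb: "(of_int b :: 'a) \<noteq> 0" using b by simp
  have nb': "(of_int b' :: 'a) \<noteq> 0" using b' by simp
  let ?x = "(of_int a * inverse (of_int b) :: 'a)"
  let ?y = "(of_int a' * inverse (of_int b') :: 'a)"
  have xb: "?x * of_int b = of_int a" using nb by (simp add: mult.assoc)
  have yb: "?y * of_int b' = of_int a'" using nb' by (simp add: mult.assoc)
  have "?x * (of_int b * of_int b') = of_int a * of_int b'"
    by (simp only: mult.assoc[symmetric] xb)
  moreover have "?y * (of_int b * of_int b') = of_int a' * of_int b"
    by (simp only: mult_of_int_commute[of b] mult.assoc[symmetric] yb)
  ultimately have "?x * (of_int b * of_int b') = ?y * (of_int b * of_int b')"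
    using eqD by simp
  then have "?x = ?y" using nb nb' by simp
  then show ?thesis using qo by (simp add: cq_def)
qed

lemma cq_char:
  assumes b: "b \<noteq> 0" and q: "q = of_int a / of_int b" and x: "x * of_int b = (of_int a :: 'a::{division_ring,ring_char_0})"
  shows "cq q = x"
proof -
  have nb: "(of_int b :: 'a) \<noteq> 0" using b by simp
  have "x = x * of_int b * inverse (of_int b)" using nb by (simp add: mult.assoc)
  then show ?thesis using x cq_frac[OF b q] by simp
qed

lemma cq_spec: obtains a b where "b > 0" "q = of_int a / of_int b"
   "(cq q :: 'a::{division_ring,ring_char_0}) * of_int b = of_int a"
proof -
  obtain a b where qo: "quotient_of q = (a, b)" by (cases "quotient_of q")
  then have b: "b > 0" by (rule quotient_of_denom_pos)
  from qo have q: "q = of_int a / of_int b" by (rule quotient_of_div)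
  have "(cq q :: 'a) = of_int a * inverse (of_int b)" using cq_frac[OF _ q] b by simp
  then have "(cq q :: 'a) * of_int b = of_int a" using b by (simp add: mult.assoc)
  then show ?thesis using that b q by blast
qed

lemma cq_add: "(cq (p + q) :: 'a::{division_ring,ring_char_0}) = cq p + cq q"
proof -
  obtain a b where b: "b > 0" and p: "p = of_int a / of_int b" and x: "(cq p :: 'a) * of_int b = of_int a"
    by (rule cq_spec)
  obtain c e where e: "e > 0" and q: "q = of_int c / of_int e" and y: "(cq q :: 'a) * of_int e = of_int c"
    by (rule cq_spec)
  have pq: "p + q = of_int (a * e + c * b) / of_int (b * e)"
    using b e p q by (simp add: field_simps)
  have be: "(of_int (b*e)::'a) = of_int b * of_int e" "(of_int (b*e)::'a) = of_int e * of_int b"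
    by (simp, metis mult.commute of_int_mult)
  have "(cq p + cq q :: 'a) * of_int (b * e) = cq p * of_int (b*e) + cq q * of_int (b*e)"
    by (simp only: distrib_right)
  also have "\<dots> = (cq p * of_int b) * of_int e + (cq q * of_int e) * of_int b"
  proof -
    have "cq p * of_int (b*e) = (cq p * of_int b) * (of_int e :: 'a)" by (simp only: be(1) mult.assoc)
    moreover have "cq q * of_int (b*e) = (cq q * of_int e) * (of_int b :: 'a)" by (simp only: be(2) mult.assoc)
    ultimately show ?thesis by simp
  qed
  also have "\<dots> = of_int (a * e + c * b)" using x y by simp
  finally show ?thesis using cq_char[OF _ pq] b e by simp
qed

lemma cq_mult: "(cq (p * q) :: 'a::{division_ring,ring_char_0}) = cq p * cq q"
proof -
  obtain a b where b: "b > 0" and p: "p = of_int a / of_int b" and x: "(cq p :: 'a) * of_int b = of_int a"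
    by (rule cq_spec)
  obtain c e where e: "e > 0" and q: "q = of_int c / of_int e" and y: "(cq q :: 'a) * of_int e = of_int c"
    by (rule cq_spec)
  have pq: "p * q = of_int (a * c) / of_int (b * e)"
    using b e p q by (simp add: field_simps)
  have be: "(of_int (b*e)::'a) = of_int e * of_int b"
    by (metis mult.commute of_int_mult)
  have "(cq p * cq q :: 'a) * of_int (b * e) = cq p * (cq q * of_int e) * of_int b"
    by (simp only: be mult.assoc)
  also have "\<dots> = (of_int c * cq p) * of_int b"
    by (simp only: y mult_of_int_commute)
  also have "\<dots> = of_int c * of_int a" by (simp only: mult.assoc x)
  also have "\<dots> = of_int (a * c)" by (metis mult.commute of_int_mult)
  finally show ?thesis using cq_char[OF _ pq] b e by simp
qed

lemma cq_one[simp]: "(cq 1 :: 'a::{division_ring,ring_char_0}) = 1"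
  using cq_char[of 1 1 1 1] by simp

lemma cq_int[simp]: "(cq (of_int k) :: 'a::{division_ring,ring_char_0}) = of_int k"
  using cq_char[of 1 "of_int k" k "of_int k"] by simp

lemma cq_nat[simp]: "(cq (of_nat k) :: 'a::{division_ring,ring_char_0}) = of_nat k"
  using cq_int[of "int k"] by simp

lemma cq_zero[simp]: "(cq 0 :: 'a::{division_ring,ring_char_0}) = 0"
  using cq_int[of 0] by simp

interpretation VD: vector_space "rat_scale :: rat \<Rightarrow> 'a::{division_ring,ring_char_0} \<Rightarrow> 'a"
  by unfold_locales (simp_all add: rat_scale_cq distrib_left distrib_right cq_add cq_mult mult.assoc)

definition vscale :: "(rat \<Rightarrow> 'b \<Rightarrow> 'b) \<Rightarrow> rat \<Rightarrow> 'b^'n \<Rightarrow> 'b^'n" where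
  "vscale s q v = (\<chi> i. s q (v $ i))"

lemma vscale_nth[simp]: "vscale s q v $ i = s q (v $ i)"
  by (simp add: vscale_def)

lemma vector_space_vscale:
  assumes "vector_space (s :: rat \<Rightarrow> 'b::ab_group_add \<Rightarrow> 'b)"
  shows "vector_space (vscale s :: rat \<Rightarrow> 'b^'n \<Rightarrow> 'b^'n)"
proof -
  interpret S: vector_space s by fact
  show ?thesis
    by unfold_locales (simp_all add: vec_eq_iff S.scale_right_distrib S.scale_left_distrib)
qed

interpretation VV: vector_space "vscale rat_scale :: rat \<Rightarrow> 'a::{division_ring,ring_char_0}^'n \<Rightarrow> _"
  by (rule vector_space_vscale) (rule VD.vector_space_axioms)

interpretation VM: vector_space "vscale (vscale rat_scale) :: rat \<Rightarrow> 'a::{division_ring,ring_char_0}^'n^'m \<Rightarrow> _"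
  by (rule vector_space_vscale) (rule VV.vector_space_axioms)


abbreviation vsc :: "rat \<Rightarrow> 'a::{division_ring,ring_char_0}^'n \<Rightarrow> 'a^'n" where
  "vsc \<equiv> vscale rat_scale"
abbreviation msc :: "rat \<Rightarrow> 'a::{division_ring,ring_char_0}^'n^'m \<Rightarrow> 'a^'n^'m" where
  "msc \<equiv> vscale (vscale rat_scale)"

lemma msc_nth[simp]: "msc q X $ i $ j = cq q * X $ i $ j"
  by (simp add: rat_scale_cq)

lemma vsc_nth[simp]: "vsc q v $ i = cq q * v $ i"
  by (simp add: rat_scale_cq)

lemma msc_mult_left: "msc q X ** Y = msc q (X ** Y)"
  by (simp add: vec_eq_iff matrix_matrix_mult_def sum_distrib_left mult.assoc rat_scale_cq)

lemma msc_mult_right: "X ** msc q Y = msc q (X ** (Y::'a::{division_ring,ring_char_0}^'n^'m))"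
proof -
  have "X $ i $ k * (cq q * Y $ k $ j) = cq q * (X $ i $ k * Y $ k $ j)" for i k j
    by (metis cq_central mult.assoc)
  then show ?thesis
    by (simp add: vec_eq_iff matrix_matrix_mult_def sum_distrib_left rat_scale_cq)
qed

lemma msc_mult_vec: "msc q X *v v = vsc q (X *v v)"
  by (simp add: vec_eq_iff matrix_vector_mult_def sum_distrib_left mult.assoc rat_scale_cq)

lemma matrix_add_rdistrib: "(A + B) ** C = A ** C + B ** (C::'a::semiring_1^'n^'m)"
  by (simp add: vec_eq_iff matrix_matrix_mult_def distrib_right sum.distrib)

lemma matrix_diff_rdistrib: "(A - B) ** C = A ** C - B ** (C::'a::ring_1^'n^'m)"
  by (simp add: vec_eq_iff matrix_matrix_mult_def left_diff_distrib sum_subtractf)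

lemma matrix_diff_ldistrib: "C ** (A - B) = C ** A - C ** (B::'a::ring_1^'n^'m)"
  by (simp add: vec_eq_iff matrix_matrix_mult_def right_diff_distrib sum_subtractf)

lemma matrix_neg_left: "(- A) ** C = - (A ** (C::'a::ring_1^'n^'m))"
  by (simp add: vec_eq_iff matrix_matrix_mult_def sum_negf)

lemma matrix_neg_right: "C ** (- A) = - (C ** (A::'a::ring_1^'n^'m))"
  by (simp add: vec_eq_iff matrix_matrix_mult_def sum_negf)

lemma matrix_sum_left: "(\<Sum>i\<in>I. f i) ** (Y::'a::semiring_1^'n^'m) = (\<Sum>i\<in>I. f i ** Y)"
  by (induct I rule: infinite_finite_induct) (simp_all add: matrix_add_rdistrib)

lemma matrix_sum_right: "(Y::'a::semiring_1^'n^'m) ** (\<Sum>i\<in>I. f i) = (\<Sum>i\<in>I. Y ** f i)"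
  by (induct I rule: infinite_finite_induct) (simp_all add: matrix_add_ldistrib)

lemma matrix_sum_vec: "(\<Sum>i\<in>I. f i) *v (v::'a::semiring_1^'n) = (\<Sum>i\<in>I. f i *v v)"
  by (induct I rule: infinite_finite_induct) (simp_all add: matrix_vector_mult_add_rdistrib)

definition mpow :: "'a::semiring_1^'n^'n \<Rightarrow> nat \<Rightarrow> 'a^'n^'n" where
  "mpow X k = (((**) X) ^^ k) (mat 1)"

lemma mpow_0[simp]: "mpow X 0 = mat 1" by (simp add: mpow_def)
lemma mpow_Suc: "mpow X (Suc k) = X ** mpow X k" by (simp add: mpow_def)

lemma nilpotent_mat_mpow: "nilpotent_mat N \<longleftrightarrow> (\<exists>m. mpow N m = 0)"
  by (simp add: nilpotent_mat_def mpow_def)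

lemma mpow_add: "mpow X (j + k) = mpow X j ** mpow X k"
  by (induct j) (simp_all add: mpow_Suc matrix_mul_assoc)

lemma mpow_Suc': "mpow X (Suc k) = mpow X k ** X"
  using mpow_add[of X k 1] by (simp add: mpow_Suc)

lemma mpow_zero_mono: "mpow X m = 0 \<Longrightarrow> m \<le> k \<Longrightarrow> mpow X k = (0::'a::semiring_1^'n^'n)"
  using mpow_add[of X m "k - m"] by simp

definition cm :: "'a::semiring_1^'n^'n \<Rightarrow> 'a^'n^'n \<Rightarrow> bool" where
  "cm X Y \<longleftrightarrow> X ** Y = Y ** X"

lemma cm_sym: "cm X Y \<Longrightarrow> cm Y X" by (simp add: cm_def)
lemma cm_refl[simp]: "cm X X" by (simp add: cm_def)
lemma cm_one[simp]: "cm X (mat 1)" "cm (mat 1) X" by (simp_all add: cm_def)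
lemma cm_zero[simp]: "cm X 0" "cm 0 X" by (simp_all add: cm_def)
lemma cm_mult: "cm X Y \<Longrightarrow> cm X Z \<Longrightarrow> cm X (Y ** Z)"
  by (simp add: cm_def matrix_mul_assoc) (metis matrix_mul_assoc)
lemma cm_add: "cm X Y \<Longrightarrow> cm X Z \<Longrightarrow> cm X (Y + Z)"
  by (simp add: cm_def matrix_add_ldistrib matrix_add_rdistrib)
lemma cm_diff: "cm X Y \<Longrightarrow> cm X Z \<Longrightarrow> cm X (Y - (Z::'a::ring_1^'n^'n))"
  by (simp add: cm_def matrix_diff_ldistrib matrix_diff_rdistrib)
lemma cm_neg: "cm X Y \<Longrightarrow> cm X (- (Y::'a::ring_1^'n^'n))"
  by (simp add: cm_def matrix_neg_left matrix_neg_right)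
lemma cm_msc: "cm X Y \<Longrightarrow> cm X (msc q Y)"
  by (simp add: cm_def msc_mult_left msc_mult_right)
lemma cm_sum: "(\<And>i. i \<in> I \<Longrightarrow> cm X (f i)) \<Longrightarrow> cm X (\<Sum>i\<in>I. f i)"
  by (simp add: cm_def matrix_sum_left matrix_sum_right)
lemma cm_mpow: "cm X Y \<Longrightarrow> cm X (mpow Y k)"
  by (induct k) (simp_all add: mpow_Suc cm_mult)

lemma mpow_mult_cm: "cm X Y \<Longrightarrow> mpow (X ** Y) k = mpow X k ** mpow Y k"
proof (induct k)
  case 0 then show ?case by simp
next
  case (Suc k)
  have c: "Y ** mpow X k = mpow X k ** Y"
    using cm_mpow[OF cm_sym[OF Suc.prems], of k] by (simp add: cm_def)
  have "mpow (X ** Y) (Suc k) = X ** (Y ** mpow X k) ** mpow Y k"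
    using Suc by (simp add: mpow_Suc matrix_mul_assoc)
  also have "\<dots> = (X ** mpow X k) ** (Y ** mpow Y k)"
    by (simp add: c matrix_mul_assoc)
  finally show ?case by (simp add: mpow_Suc)
qed

lemma msc_msc: "msc p (msc q X) = msc (p * q) X"
  by (rule VM.scale_scale)

lemma mpow_msc: "mpow (msc q X) k = msc (q ^ k) (mpow X k)"
proof (induct k)
  case 0 then show ?case by (simp add: vec_eq_iff)
next
  case (Suc k) then show ?case
    by (simp add: mpow_Suc msc_mult_left msc_mult_right msc_msc mult.commute)
qed

lemma mpow_zero_iff_cm: "cm X Y \<Longrightarrow> mpow X m = 0 \<Longrightarrow> mpow (X ** Y) m = 0"
  by (simp add: mpow_mult_cm)

lemma msc_of_nat_Suc: "msc (of_nat (Suc k)) X = msc (of_nat k) X + X"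
  by (simp add: vec_eq_iff distrib_right rat_scale_cq cq_add)

lemma binomial_mpow:
  assumes N: "mpow N K = (0::'a::{division_ring,ring_char_0}^'n^'n)"
  shows "mpow (mat 1 + N) t = (\<Sum>j<K. msc (of_nat (t choose j)) (mpow N j))"
proof (induct t)
  case 0
  show ?case
  proof (cases K)
    case 0 then show ?thesis using N by simp
  next
    case (Suc K')
    have "(\<Sum>j<K. msc (of_nat (0 choose j)) (mpow N j)) = msc (of_nat (0 choose 0)) (mpow N 0) + (\<Sum>j<K'. msc (of_nat (0 choose Suc j)) (mpow N (Suc j)))"
      unfolding Suc by (rule sum.lessThan_Suc_shift)
    also have "\<dots> = mat 1" by (simp add: vec_eq_iff)
    finally show ?thesis by simp
  qed
next
  case (Suc t)
  define h where "h j = (if j = 0 then 0 else msc (of_nat (t choose (j - 1))) (mpow N j))" for j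
  have "(\<Sum>j<K. N ** msc (of_nat (t choose j)) (mpow N j)) = (\<Sum>j<K. h (Suc j))"
    by (simp add: h_def msc_mult_right mpow_Suc)
  also have "\<dots> = (\<Sum>j<Suc K. h j)"
    using sum.lessThan_Suc_shift[of h K] by (simp add: h_def)
  also have "\<dots> = (\<Sum>j<K. h j)"
    using N by (simp add: h_def vec_eq_iff)
  finally have A: "(\<Sum>j<K. N ** msc (of_nat (t choose j)) (mpow N j)) = (\<Sum>j<K. h j)" .
  have "mpow (mat 1 + N) (Suc t) = (mat 1 + N) ** (\<Sum>j<K. msc (of_nat (t choose j)) (mpow N j))"
    by (simp add: mpow_Suc Suc)
  also have "\<dots> = (\<Sum>j<K. msc (of_nat (t choose j)) (mpow N j)) + (\<Sum>j<K. h j)"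
  proof -
    have "N ** (\<Sum>j<K. msc (of_nat (t choose j)) (mpow N j)) = (\<Sum>j<K. h j)"
      using A by (simp only: matrix_sum_right)
    then show ?thesis by (simp only: matrix_add_rdistrib matrix_mul_lid)
  qed
  also have "\<dots> = (\<Sum>j<K. msc (of_nat (t choose j)) (mpow N j) + h j)"
    by (simp add: sum.distrib)
  also have "\<dots> = (\<Sum>j<K. msc (of_nat (Suc t choose j)) (mpow N j))"
  proof (rule sum.cong[OF refl])
    fix j
    show "msc (of_nat (t choose j)) (mpow N j) + h j = msc (of_nat (Suc t choose j)) (mpow N j)"
    proof (cases j)
      case 0 then show ?thesis by (simp add: h_def)
    next
      case (Suc j') then show ?thesis
        by (simp add: h_def VM.scale_left_distrib[symmetric] add.commute)
    qed
  qed
  finally show ?case .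
qed


lemma poly_coeff_unique:
  assumes vs: "vector_space (s :: rat \<Rightarrow> 'b::ab_group_add \<Rightarrow> 'b)"
    and fI: "finite I" and fJ: "finite J"
    and eq: "\<And>t::nat. (\<Sum>i\<in>I. s (poly (P i) (of_nat t)) (A i)) = (\<Sum>j\<in>J. s (poly (Q j) (of_nat t)) (B j))"
  shows "(\<Sum>i\<in>I. s (coeff (P i) k) (A i)) = (\<Sum>j\<in>J. s (coeff (Q j) k) (B j))"
proof -
  interpret V: vector_space s by fact
  obtain Bs where Bs: "V.independent Bs" "UNIV \<subseteq> V.span Bs"
    using V.basis_exists[of UNIV] by (metis V.independent_empty)
  have sp: "x \<in> V.span Bs" for x using Bs by auto
  note rep = V.representation_diff[OF Bs(1) sp sp] V.representation_sum[OF Bs(1) sp]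
    V.representation_scale[OF Bs(1) sp]
  have repsum: "V.representation Bs (\<Sum>i\<in>I. s (c i) (A i)) b = (\<Sum>i\<in>I. c i * V.representation Bs (A i) b)"
    for c :: "_ \<Rightarrow> rat" and I and A :: "_ \<Rightarrow> 'b" and b
    by (simp add: V.representation_sum[OF Bs(1) sp] V.representation_scale[OF Bs(1) sp])
  let ?L = "(\<Sum>i\<in>I. s (coeff (P i) k) (A i))" and ?R = "(\<Sum>j\<in>J. s (coeff (Q j) k) (B j))"
  have zero: "V.representation Bs (?L - ?R) b = 0" for b
  proof -
    define pol where "pol = (\<Sum>i\<in>I. smult (V.representation Bs (A i) b) (P i)) - (\<Sum>j\<in>J. smult (V.representation Bs (B j) b) (Q j))"
    have "poly pol (of_nat t) = 0" for t
    proof -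
      have "poly pol (of_nat t) = V.representation Bs ((\<Sum>i\<in>I. s (poly (P i) (of_nat t)) (A i)) - (\<Sum>j\<in>J. s (poly (Q j) (of_nat t)) (B j))) b"
        by (simp add: pol_def poly_sum V.representation_diff[OF Bs(1) sp sp] repsum mult.commute)
      also have "\<dots> = 0" using eq[of t] by (simp add: V.representation_zero)
      finally show ?thesis .
    qed
    note pz = this
    have "pol = 0"
    proof (rule ccontr)
      assume "pol \<noteq> 0"
      then have "finite {x. poly pol x = 0}" by (rule poly_roots_finite)
      moreover have "range (of_nat :: nat \<Rightarrow> rat) \<subseteq> {x. poly pol x = 0}"
        using pz by auto
      moreover have "infinite (range (of_nat :: nat \<Rightarrow> rat))"
        using inj_of_nat by (metis finite_imageD infinite_UNIV_nat inj_on_subset subset_UNIV)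
      ultimately show False by (meson finite_subset)
    qed
    then have "coeff pol k = 0" by simp
    then show ?thesis
      by (simp add: pol_def coeff_sum V.representation_diff[OF Bs(1) sp sp] repsum mult.commute)
  qed
  have "?L - ?R = (\<Sum>b | V.representation Bs (?L - ?R) b \<noteq> 0. s (V.representation Bs (?L - ?R) b) b)"
    using V.sum_nonzero_representation_eq[OF Bs(1) sp] by simp
  also have "\<dots> = 0" using zero by simp
  finally show ?thesis by simp
qed

definition bp :: "nat \<Rightarrow> rat poly" where
  "bp j = smult (1 / fact j) (\<Prod>i=0..<j. [:- of_nat i, 1:])"

lemma poly_bp: "poly (bp j) (of_nat t) = of_nat (t choose j)"
  by (simp add: bp_def poly_prod binomial_gbinomial gbinomial_prod_rev)

lemma coeff_bp_0: "coeff (bp j) 0 = (if j = 0 then 1 else 0)"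
  using poly_bp[of j 0] by (simp add: poly_0_coeff_0)

definition cc :: "nat \<Rightarrow> rat" where "cc j = coeff (bp j) 1"

lemma cc_0[simp]: "cc 0 = 0" by (simp add: cc_def bp_def)
lemma cc_1[simp]: "cc 1 = 1" by (simp add: cc_def bp_def)

lemma coeff_bp_mult_1: "coeff (bp j * bp k) 1 = (if j = 0 then cc k else 0) + (if k = 0 then cc j else 0)"
  by (simp add: coeff_mult coeff_bp_0 cc_def)


definition mlog :: "'a::{division_ring,ring_char_0}^'n^'n \<Rightarrow> 'a^'n^'n" where
  "mlog X = (\<Sum>j < (LEAST m. mpow (X - mat 1) m = 0). msc (cc j) (mpow (X - mat 1) j))"

lemma cc_Suc0[simp]: "cc (Suc 0) = 1" using cc_1 by simp

lemma mlog_eq: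
  assumes K: "mpow (X - mat 1) K = 0"
  shows "mlog X = (\<Sum>j<K. msc (cc j) (mpow (X - mat 1) j))"
proof -
  let ?a = "X - mat 1"
  define L where "L = (LEAST m. mpow ?a m = 0)"
  have L: "mpow ?a L = 0" unfolding L_def by (rule LeastI[of _ K]) (rule K)
  have LK: "L \<le> K" unfolding L_def by (rule Least_le) (rule K)
  have "(\<Sum>j<K. msc (cc j) (mpow ?a j)) = (\<Sum>j<L. msc (cc j) (mpow ?a j))"
  proof (rule sum.mono_neutral_right)
    show "finite {..<K}" by simp
    show "{..<L} \<subseteq> {..<K}" using LK by auto
    show "\<forall>i\<in>{..<K} - {..<L}. msc (cc i) (mpow ?a i) = 0"
      using mpow_zero_mono[OF L] by (auto simp: vec_eq_iff)
  qed
  then show ?thesis by (simp add: mlog_def L_def)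
qed

lemma mlog_hom:
  fixes X Y :: "'a::{division_ring,ring_char_0}^'n^'n"
  assumes a: "mpow (X - mat 1) M = 0" and b: "mpow (Y - mat 1) M = 0"
    and c: "mpow (X ** Y - mat 1) M = 0" and XY: "cm X Y"
  shows "mlog (X ** Y) = mlog X + mlog Y"
proof -
  define M' where "M' = Suc M"
  have a': "mpow (X - mat 1) M' = 0" using mpow_zero_mono[OF a] by (simp add: M'_def)
  have b': "mpow (Y - mat 1) M' = 0" using mpow_zero_mono[OF b] by (simp add: M'_def)
  have c': "mpow (X ** Y - mat 1) M' = 0" using mpow_zero_mono[OF c] by (simp add: M'_def)
  have M'0: "0 < M'" by (simp add: M'_def)
  let ?a = "X - mat 1" and ?b = "Y - mat 1" and ?c = "X ** Y - mat 1"
  have X: "X = mat 1 + ?a" and Y: "Y = mat 1 + ?b" and XY1: "X ** Y = mat 1 + ?c" by simp_all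
  have eq: "(\<Sum>m\<in>{..<M'}. msc (poly (bp m) (of_nat t)) (mpow ?c m)) =
        (\<Sum>p\<in>{..<M'}\<times>{..<M'}. msc (poly (bp (fst p) * bp (snd p)) (of_nat t)) (mpow ?a (fst p) ** mpow ?b (snd p)))"
    for t :: nat
  proof -
    have "(\<Sum>m\<in>{..<M'}. msc (poly (bp m) (of_nat t)) (mpow ?c m)) = mpow (X ** Y) t"
      using binomial_mpow[OF c', of t] XY1 by (simp add: poly_bp)
    also have "\<dots> = mpow X t ** mpow Y t" by (rule mpow_mult_cm[OF XY])
    also have "\<dots> = (\<Sum>j<M'. msc (of_nat (t choose j)) (mpow ?a j)) ** (\<Sum>k<M'. msc (of_nat (t choose k)) (mpow ?b k))"
      using binomial_mpow[OF a', of t] binomial_mpow[OF b', of t] X Y by simp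
    also have "\<dots> = (\<Sum>j<M'. \<Sum>k<M'. msc (of_nat (t choose j) * of_nat (t choose k)) (mpow ?a j ** mpow ?b k))"
      by (subst matrix_sum_left) (simp only: matrix_sum_right msc_mult_left msc_mult_right msc_msc mult.commute)
    also have "\<dots> = (\<Sum>p\<in>{..<M'}\<times>{..<M'}. msc (poly (bp (fst p) * bp (snd p)) (of_nat t)) (mpow ?a (fst p) ** mpow ?b (snd p)))"
      by (simp add: sum.cartesian_product poly_bp case_prod_beta)
    finally show ?thesis .
  qed
  have "(\<Sum>m\<in>{..<M'}. msc (coeff (bp m) 1) (mpow ?c m)) =
        (\<Sum>p\<in>{..<M'}\<times>{..<M'}. msc (coeff (bp (fst p) * bp (snd p)) 1) (mpow ?a (fst p) ** mpow ?b (snd p)))"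
    by (rule poly_coeff_unique[OF VM.vector_space_axioms _ _ eq]) simp_all
  also have "\<dots> = (\<Sum>j<M'. \<Sum>k<M'. msc ((if j = 0 then cc k else 0) + (if k = 0 then cc j else 0)) (mpow ?a j ** mpow ?b k))"
    unfolding sum.cartesian_product
    by (rule sum.cong[OF refl]) (auto simp: coeff_bp_mult_1 coeff_bp_mult_1[unfolded One_nat_def] split_beta)
  also have "\<dots> = (\<Sum>j<M'. \<Sum>k<M'. msc (if j = 0 then cc k else 0) (mpow ?a j ** mpow ?b k))
      + (\<Sum>j<M'. \<Sum>k<M'. msc (if k = 0 then cc j else 0) (mpow ?a j ** mpow ?b k))"
    by (simp add: VM.scale_left_distrib sum.distrib)
  also have "\<dots> = (\<Sum>k<M'. msc (cc k) (mpow ?b k)) + (\<Sum>j<M'. msc (cc j) (mpow ?a j))"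
  proof -
    have "(\<Sum>j<M'. \<Sum>k<M'. msc (if j = 0 then cc k else 0) (mpow ?a j ** mpow ?b k)) =
          (\<Sum>j<M'. if j = 0 then (\<Sum>k<M'. msc (cc k) (mpow ?b k)) else 0)"
      by (rule sum.cong) (auto simp: vec_eq_iff)
    also have "\<dots> = (\<Sum>k<M'. msc (cc k) (mpow ?b k))" using M'0 by simp
    finally have 1: "(\<Sum>j<M'. \<Sum>k<M'. msc (if j = 0 then cc k else 0) (mpow ?a j ** mpow ?b k)) = (\<Sum>k<M'. msc (cc k) (mpow ?b k))" .
    have "(\<Sum>j<M'. \<Sum>k<M'. msc (if k = 0 then cc j else 0) (mpow ?a j ** mpow ?b k)) =
          (\<Sum>j<M'. msc (cc j) (mpow ?a j))"
    proof (rule sum.cong[OF refl])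
      fix j
      have "(\<Sum>k<M'. msc (if k = 0 then cc j else 0) (mpow ?a j ** mpow ?b k)) =
          (\<Sum>k<M'. if k = 0 then msc (cc j) (mpow ?a j) else 0)"
        by (rule sum.cong) (auto simp: vec_eq_iff)
      also have "\<dots> = msc (cc j) (mpow ?a j)" using M'0 by simp
      finally show "(\<Sum>k<M'. msc (if k = 0 then cc j else 0) (mpow ?a j ** mpow ?b k)) = msc (cc j) (mpow ?a j)" .
    qed
    with 1 show ?thesis by simp
  qed
  finally show ?thesis
    by (simp add: mlog_eq[OF a'] mlog_eq[OF b'] mlog_eq[OF c'] cc_def add.commute)
qed

lemma mlog_kills:
  assumes K: "mpow (X - mat 1) K = 0" and v: "(X - mat 1) *v v = 0"
  shows "mlog X *v v = (0::'a::{division_ring,ring_char_0}^'n)"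
proof -
  let ?a = "X - mat 1"
  have "msc (cc j) (mpow ?a j) *v v = 0" for j
  proof (cases j)
    case 0 then show ?thesis by (simp add: msc_mult_vec vec_eq_iff)
  next
    case (Suc j')
    have "mpow ?a j *v v = mpow ?a j' *v (?a *v v)"
      by (simp add: Suc mpow_Suc' matrix_vector_mul_assoc)
    then show ?thesis using v by (simp add: msc_mult_vec vec_eq_iff)
  qed
  then show ?thesis by (simp add: mlog_eq[OF K] matrix_sum_vec)
qed

lemma mlog_factor:
  assumes K: "mpow (X - mat 1) K = 0"
  shows "mlog X = (X - mat 1) ** (\<Sum>j<K. msc (cc (Suc j)) (mpow (X - mat 1) j))"
proof -
  let ?a = "X - mat 1"
  have K': "mpow ?a (Suc K) = 0" using mpow_zero_mono[OF K] by simp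
  have "mlog X = (\<Sum>j<Suc K. msc (cc j) (mpow ?a j))" by (rule mlog_eq[OF K'])
  also have "\<dots> = msc (cc 0) (mpow ?a 0) + (\<Sum>j<K. msc (cc (Suc j)) (mpow ?a (Suc j)))"
    by (rule sum.lessThan_Suc_shift)
  also have "\<dots> = ?a ** (\<Sum>j<K. msc (cc (Suc j)) (mpow ?a j))"
    by (simp add: matrix_sum_right msc_mult_right mpow_Suc vec_eq_iff)
  finally show ?thesis .
qed

lemma cm_poly_a: "cm a (\<Sum>j<K. msc (f j) (mpow a j))"
  by (intro cm_sum cm_msc cm_mpow cm_refl)

lemma mlog_nilpotent:
  assumes K: "mpow (X - mat 1) K = 0"
  shows "mpow (mlog X) K = 0"
  using mpow_mult_cm[OF cm_poly_a, of "X - mat 1" _ K] K mlog_factor[OF K] by simp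

lemma mlog_zero:
  assumes K: "mpow (X - mat 1) K = 0" and z: "mlog X = 0"
  shows "X = (mat 1 :: 'a::{division_ring,ring_char_0}^'n^'n)"
proof -
  let ?a = "X - mat 1"
  define U where "U = (\<Sum>j<K. msc (cc (Suc j)) (mpow ?a j))"
  have 0: "?a ** U = 0" using mlog_factor[OF K] z by (simp add: U_def)
  show ?thesis
  proof (cases K)
    case 0
    then have "mat 1 = (0::'a^'n^'n)" using K by simp
    then have "X = 0" "mat 1 = (0::'a^'n^'n)" by (metis matrix_mul_rid times0_right)+
    then show ?thesis by simp
  next
    case (Suc K')
    define W where "W = - (\<Sum>j<K'. msc (cc (Suc (Suc j))) (mpow ?a j))"
    have "U = msc (cc (Suc 0)) (mpow ?a 0) + (\<Sum>j<K'. msc (cc (Suc (Suc j))) (mpow ?a (Suc j)))"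
      unfolding U_def Suc by (rule sum.lessThan_Suc_shift)
    also have "\<dots> = mat 1 - ?a ** W"
      by (simp add: W_def matrix_neg_right matrix_sum_right msc_mult_right mpow_Suc vec_eq_iff)
    finally have U: "U = mat 1 - ?a ** W" .
    have aZ: "?a = ?a ** (?a ** W)"
      using 0 by (simp add: U matrix_diff_ldistrib)
    have cW: "cm ?a W" unfolding W_def by (intro cm_neg cm_poly_a)
    have Zn: "mpow (?a ** W) K = 0" using mpow_mult_cm[OF cW, of K] K by simp
    have "?a = ?a ** mpow (?a ** W) k" for k
    proof (induct k)
      case 0 show ?case by simp
    next
      case (Suc k)
      have "?a ** mpow (?a ** W) (Suc k) = (?a ** (?a ** W)) ** mpow (?a ** W) k"
        by (simp add: mpow_Suc matrix_mul_assoc)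
      also have "\<dots> = ?a" using aZ Suc by simp
      finally show ?case by simp
    qed
    from this[of K] Zn have "?a = 0" by simp
    then show ?thesis by simp
  qed
qed


lemma GL_group: "group (GL :: ('a::semiring_1^'n^'n) monoid)"
proof (rule groupI)
  fix x y :: "'a^'n^'n"
  assume "x \<in> carrier GL" "y \<in> carrier GL"
  then obtain x' y' where "x ** x' = mat 1" "x' ** x = mat 1" "y ** y' = mat 1" "y' ** y = mat 1"
    by (auto simp: GL_def invertible_def)
  then have "(x ** y) ** (y' ** x') = mat 1" "(y' ** x') ** (x ** y) = mat 1"
    by (metis matrix_mul_assoc matrix_mul_lid)+
  then show "x \<otimes>\<^bsub>GL\<^esub> y \<in> carrier GL" by (auto simp: GL_def invertible_def)
next
  show "\<one>\<^bsub>GL\<^esub> \<in> carrier (GL :: ('a::semiring_1^'n^'n) monoid)"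
    by (auto simp: GL_def invertible_def intro!: exI[of _ "mat 1"])
next
  fix x y z :: "'a^'n^'n"
  show "x \<otimes>\<^bsub>GL\<^esub> y \<otimes>\<^bsub>GL\<^esub> z = x \<otimes>\<^bsub>GL\<^esub> (y \<otimes>\<^bsub>GL\<^esub> z)"
    by (simp add: GL_def matrix_mul_assoc)
next
  fix x :: "'a^'n^'n"
  show "\<one>\<^bsub>GL\<^esub> \<otimes>\<^bsub>GL\<^esub> x = x" by (simp add: GL_def)
next
  fix x :: "'a^'n^'n"
  assume "x \<in> carrier GL"
  then obtain x' where "x ** x' = mat 1" "x' ** x = mat 1"
    by (auto simp: GL_def invertible_def)
  then show "\<exists>y\<in>carrier GL. y \<otimes>\<^bsub>GL\<^esub> x = \<one>\<^bsub>GL\<^esub>"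
    by (auto simp: GL_def invertible_def intro!: bexI[of _ x'])
qed

locale SG =
  fixes S :: "('a::{division_ring,ring_char_0}^'n^'n) set"
  assumes sub: "subgroup S GL"
    and ab: "\<forall>A\<in>S. \<forall>B\<in>S. A ** B = B ** A"
    and unip: "\<forall>A\<in>S. unipotent_mat A"
begin

abbreviation "G \<equiv> GL\<lparr>carrier := S\<rparr>"

lemma G_simps[simp]: "carrier G = S" "mult G = (**)" "one G = mat 1"
  by (simp_all add: GL_def)

lemma G_group: "group G"
  by (rule subgroup.subgroup_is_group[OF sub GL_group])

lemma G_comm: "comm_group G"
proof -
  interpret group G by (rule G_group)
  show ?thesis
  proof (rule group_comm_groupI)
    fix x y assume "x \<in> carrier G" "y \<in> carrier G"
    then show "x \<otimes>\<^bsub>G\<^esub> y = y \<otimes>\<^bsub>G\<^esub> x" using ab by simp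
  qed
qed

lemma S_nil: "A \<in> S \<Longrightarrow> \<exists>M. mpow (A - mat 1) M = 0"
  using unip by (auto simp: unipotent_mat_def nilpotent_mat_mpow)

lemma one_S: "mat 1 \<in> S"
proof -
  interpret group G by (rule G_group)
  show ?thesis using one_closed by simp
qed

lemma mult_S: "A \<in> S \<Longrightarrow> B \<in> S \<Longrightarrow> A ** B \<in> S"
proof -
  interpret group G by (rule G_group)
  show "A \<in> S \<Longrightarrow> B \<in> S \<Longrightarrow> A ** B \<in> S" using m_closed[of A B] by simp
qed

lemma inv_S: "A \<in> S \<Longrightarrow> inv\<^bsub>G\<^esub> A \<in> S"
proof -
  interpret group G by (rule G_group)
  show "A \<in> S \<Longrightarrow> inv\<^bsub>G\<^esub> A \<in> S" using inv_closed[of A] by simp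
qed

lemma pow_S: "A \<in> S \<Longrightarrow> A [^]\<^bsub>G\<^esub> (k::nat) \<in> S"
proof -
  interpret group G by (rule G_group)
  show "A \<in> S \<Longrightarrow> A [^]\<^bsub>G\<^esub> (k::nat) \<in> S" using nat_pow_closed[of A k] by simp
qed

lemma ipow_S: "A \<in> S \<Longrightarrow> A [^]\<^bsub>G\<^esub> (k::int) \<in> S"
proof -
  interpret group G by (rule G_group)
  show "A \<in> S \<Longrightarrow> A [^]\<^bsub>G\<^esub> (k::int) \<in> S" using int_pow_closed[of A k] by simp
qed

lemma finprod_S: "f \<in> I \<rightarrow> S \<Longrightarrow> finprod G f I \<in> S"
proof -
  interpret comm_group G by (rule G_comm)
  show "f \<in> I \<rightarrow> S \<Longrightarrow> finprod G f I \<in> S" using finprod_closed[of f I] by simp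
qed

lemma mlog_one: "mlog (mat 1 :: 'a^'n^'n) = 0"
proof -
  have "mpow (mat 1 - mat 1 :: 'a^'n^'n) 1 = 0" by (simp add: mpow_Suc)
  then show ?thesis by (simp add: mlog_eq vec_eq_iff)
qed

lemma L_hom: "A \<in> S \<Longrightarrow> B \<in> S \<Longrightarrow> mlog (A ** B) = mlog A + mlog B"
proof -
  assume A: "A \<in> S" and B: "B \<in> S"
  obtain M1 where h1: "mpow (A - mat 1) M1 = 0" using S_nil[OF A] by blast
  obtain M2 where h2: "mpow (B - mat 1) M2 = 0" using S_nil[OF B] by blast
  obtain M3 where h3: "mpow (A ** B - mat 1) M3 = 0" using S_nil[OF mult_S[OF A B]] by blast
  have "mpow (A - mat 1) (M1+M2+M3) = 0" by (rule mpow_zero_mono[OF h1]) simp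
  moreover have "mpow (B - mat 1) (M1+M2+M3) = 0" by (rule mpow_zero_mono[OF h2]) simp
  moreover have "mpow (A ** B - mat 1) (M1+M2+M3) = 0" by (rule mpow_zero_mono[OF h3]) simp
  moreover have "cm A B" using ab A B by (simp add: cm_def)
  ultimately show ?thesis by (rule mlog_hom)
qed

lemma L_inv: "A \<in> S \<Longrightarrow> mlog (inv\<^bsub>G\<^esub> A) = - mlog A"
proof -
  assume A: "A \<in> S"
  interpret group G by (rule G_group)
  have "inv\<^bsub>G\<^esub> A \<in> S" using A by (rule inv_S)
  moreover have "A ** inv\<^bsub>G\<^esub> A = mat 1" using r_inv[of A] A by simp
  ultimately have "mlog A + mlog (inv\<^bsub>G\<^esub> A) = 0"
    using L_hom[OF A, of "inv\<^bsub>G\<^esub> A"] mlog_one by simp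
  then show ?thesis by (simp add: eq_neg_iff_add_eq_0 add.commute)
qed

lemma L_pow_nat: "A \<in> S \<Longrightarrow> mlog (A [^]\<^bsub>G\<^esub> (k::nat)) = msc (of_nat k) (mlog A)"
proof (induct k)
  case 0 then show ?case by (simp add: mlog_one vec_eq_iff)
next
  case (Suc k)
  interpret group G by (rule G_group)
  have "A [^]\<^bsub>G\<^esub> k \<in> S" using Suc.prems by (rule pow_S)
  then have "mlog (A [^]\<^bsub>G\<^esub> Suc k) = msc (of_nat k) (mlog A) + mlog A"
    using Suc L_hom[of "A [^]\<^bsub>G\<^esub> k" A] by simp
  then show ?case by (simp only: msc_of_nat_Suc)
qed

lemma L_pow_int: "A \<in> S \<Longrightarrow> mlog (A [^]\<^bsub>G\<^esub> (k::int)) = msc (of_int k) (mlog A)"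
proof -
  assume A: "A \<in> S"
  show ?thesis
  proof (cases "k < 0")
    case True
    have p: "A [^]\<^bsub>G\<^esub> k = inv\<^bsub>G\<^esub> (A [^]\<^bsub>G\<^esub> (nat (-k)))"
      by (subst int_pow_def2) (simp only: if_P[OF True])
    have "mlog (A [^]\<^bsub>G\<^esub> k) = - mlog (A [^]\<^bsub>G\<^esub> (nat (-k)))"
      unfolding p by (rule L_inv[OF pow_S[OF A]])
    also have "\<dots> = - msc (of_nat (nat (-k))) (mlog A)" by (simp only: L_pow_nat[OF A])
    also have "\<dots> = msc (- of_nat (nat (-k))) (mlog A)" by (rule VM.scale_minus_left[symmetric])
    also have "(- of_nat (nat (-k)) :: rat) = of_int k" using True by simp
    finally show ?thesis .
  next
    case False
    have p: "A [^]\<^bsub>G\<^esub> k = A [^]\<^bsub>G\<^esub> (nat k)"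
      by (subst int_pow_def2) (simp only: if_not_P[OF False])
    have "mlog (A [^]\<^bsub>G\<^esub> k) = msc (of_nat (nat k)) (mlog A)"
      unfolding p by (rule L_pow_nat[OF A])
    also have "(of_nat (nat k) :: rat) = of_int k" using False by simp
    finally show ?thesis .
  qed
qed

lemma L_finprod: "finite I \<Longrightarrow> f \<in> I \<rightarrow> S \<Longrightarrow> mlog (finprod G f I) = (\<Sum>i\<in>I. mlog (f i))"
proof (induct I rule: finite_induct)
  case empty
  interpret comm_group G by (rule G_comm)
  show ?case by (simp add: mlog_one)
next
  case (insert x I)
  interpret comm_group G by (rule G_comm)
  have "finprod G f I \<in> S" using insert by (intro finprod_S) auto
  then show ?case using insert L_hom[of "f x" "finprod G f I"] by (auto simp: Pi_def)
qed

lemma L_zero: "A \<in> S \<Longrightarrow> mlog A = 0 \<Longrightarrow> A = mat 1"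
  using S_nil mlog_zero by blast

lemma L_nil: "A \<in> S \<Longrightarrow> \<exists>M. mpow (mlog A) M = 0"
  using S_nil mlog_nilpotent by blast

end


context SG begin

lemma span_int:
  assumes fT: "finite T" and x: "x \<in> VM.span (mlog ` T)"
  shows "\<exists>m::int. m > 0 \<and> (\<exists>c::_ \<Rightarrow> int. msc (of_int m) x = (\<Sum>a\<in>T. msc (of_int (c a)) (mlog a)))"
proof -
  let ?P = "\<lambda>x. \<exists>m::int. m > 0 \<and> (\<exists>c::_ \<Rightarrow> int. msc (of_int m) x = (\<Sum>a\<in>T. msc (of_int (c a)) (mlog a)))"
  show ?thesis
  proof (rule VM.span_induct[OF x, of ?P])
    show "VM.subspace (Collect ?P)"
      unfolding VM.subspace_def
    proof (intro conjI ballI allI)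
      show "0 \<in> Collect ?P"
        by (auto intro!: exI[of _ 1] exI[of _ "\<lambda>_. 0"] simp: vec_eq_iff)
    next
      fix x y assume "x \<in> Collect ?P" "y \<in> Collect ?P"
      then obtain m1 c1 m2 c2 where m1: "m1 > (0::int)" "msc (of_int m1) x = (\<Sum>a\<in>T. msc (of_int (c1 a)) (mlog a))"
        and m2: "m2 > (0::int)" "msc (of_int m2) y = (\<Sum>a\<in>T. msc (of_int (c2 a)) (mlog a))"
        by auto
      have "msc (of_int (m1 * m2)) (x + y) = msc (of_int m2) (msc (of_int m1) x) + msc (of_int m1) (msc (of_int m2) y)"
        by (simp add: VM.scale_right_distrib msc_msc mult.commute)
      also have "\<dots> = (\<Sum>a\<in>T. msc (of_int (m2 * c1 a + m1 * c2 a)) (mlog a))"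
        unfolding m1(2) m2(2)
        by (simp add: VM.scale_sum_right msc_msc sum.distrib[symmetric] VM.scale_left_distrib[symmetric])
      finally show "x + y \<in> Collect ?P" using m1 m2
        by (auto intro!: exI[of _ "m1 * m2"] exI[of _ "\<lambda>a. m2 * c1 a + m1 * c2 a"])
    next
      fix q :: rat and x assume "x \<in> Collect ?P"
      then obtain m c where m: "m > (0::int)" "msc (of_int m) x = (\<Sum>a\<in>T. msc (of_int (c a)) (mlog a))"
        by auto
      obtain a b where qo: "quotient_of q = (a, b)" by (cases "quotient_of q")
      then have b: "b > 0" by (rule quotient_of_denom_pos)
      from qo have q: "q = of_int a / of_int b" by (rule quotient_of_div)
      have "msc (of_int (b * m)) (msc q x) = msc (of_int a) (msc (of_int m) x)"
        using b by (simp add: msc_msc q field_simps)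
      also have "\<dots> = (\<Sum>i\<in>T. msc (of_int (a * c i)) (mlog i))"
        unfolding m(2) by (simp add: VM.scale_sum_right msc_msc)
      finally show "msc q x \<in> Collect ?P" using m b by (auto intro!: exI[of _ "b * m"] exI[of _ "\<lambda>i. a * c i"])
    qed
  next
    fix x assume "x \<in> mlog ` T"
    then obtain a0 where a0: "a0 \<in> T" "x = mlog a0" by auto
    have "(\<Sum>a\<in>T. msc (of_int (if a = a0 then 1 else 0)) (mlog a)) = (\<Sum>a\<in>T. if a = a0 then mlog a else 0)"
      by (rule sum.cong) (auto simp: vec_eq_iff)
    also have "\<dots> = mlog a0" using a0 fT by simp
    finally show "?P x" using a0
      by (auto intro!: exI[of _ 1] exI[of _ "\<lambda>a. if a = a0 then 1 else 0"] simp: vec_eq_iff)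
  qed
qed

lemma L_sum_finprod:
  assumes "finite T" "T \<subseteq> S"
  shows "(\<Sum>a\<in>T. msc (of_int (c a)) (mlog a)) = mlog (finprod G (\<lambda>a. a [^]\<^bsub>G\<^esub> (c a :: int)) T)"
    and "finprod G (\<lambda>a. a [^]\<^bsub>G\<^esub> (c a :: int)) T \<in> S"
proof -
  have f: "(\<lambda>a. a [^]\<^bsub>G\<^esub> (c a :: int)) \<in> T \<rightarrow> S" using assms ipow_S by auto
  show "(\<Sum>a\<in>T. msc (of_int (c a)) (mlog a)) = mlog (finprod G (\<lambda>a. a [^]\<^bsub>G\<^esub> (c a :: int)) T)"
  proof -
    have "mlog (finprod G (\<lambda>a. a [^]\<^bsub>G\<^esub> (c a :: int)) T) = (\<Sum>a\<in>T. mlog (a [^]\<^bsub>G\<^esub> (c a :: int)))"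
      by (rule L_finprod[OF assms(1) f])
    also have "\<dots> = (\<Sum>a\<in>T. msc (of_int (c a)) (mlog a))"
      by (rule sum.cong[OF refl]) (use assms(2) L_pow_int in blast)
    finally show ?thesis by (rule sym)
  qed
  show "finprod G (\<lambda>a. a [^]\<^bsub>G\<^esub> (c a :: int)) T \<in> S" using finprod_S[OF f] .
qed

lemma span_nil:
  assumes fT: "finite T" and TS: "T \<subseteq> S" and x: "x \<in> VM.span (mlog ` T)"
  shows "\<exists>M. mpow x M = 0"
proof -
  obtain m c where m: "m > (0::int)" "msc (of_int m) x = (\<Sum>a\<in>T. msc (of_int (c a)) (mlog a))"
    using span_int[OF fT x] by blast
  have e: "msc (of_int m) x = mlog (finprod G (\<lambda>a. a [^]\<^bsub>G\<^esub> (c a :: int)) T)"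
    using m(2) L_sum_finprod(1)[OF fT TS] by simp
  obtain M where "mpow (mlog (finprod G (\<lambda>a. a [^]\<^bsub>G\<^esub> (c a :: int)) T)) M = 0"
    using L_nil[OF L_sum_finprod(2)[OF fT TS]] by blast
  then have M: "mpow (msc (of_int m) x) M = 0" by (simp only: e)
  then have "msc (of_int m ^ M) (mpow x M) = 0" by (simp add: mpow_msc)
  then have "mpow x M = 0" using m(1) by simp
  then show ?thesis by blast
qed

lemma Zindep_imp:
  assumes Z: "Z_indep G T"
  shows "inj_on mlog T" "VM.independent (mlog ` T)"
proof -
  have fT: "finite T" and TS: "T \<subseteq> S" and Zc: "\<And>c. finprod G (\<lambda>g. g [^]\<^bsub>G\<^esub> (c g :: int)) T = mat 1 \<Longrightarrow> \<forall>g\<in>T. c g = 0"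
    using Z by (auto simp: Z_indep_def)
  have key: "\<forall>g\<in>T. c g = 0" if "(\<Sum>a\<in>T. msc (of_int (c a)) (mlog a)) = 0" for c
  proof -
    have "mlog (finprod G (\<lambda>a. a [^]\<^bsub>G\<^esub> (c a :: int)) T) = 0"
      using that L_sum_finprod(1)[OF fT TS] by simp
    then have "finprod G (\<lambda>a. a [^]\<^bsub>G\<^esub> (c a :: int)) T = mat 1"
      using L_zero[OF L_sum_finprod(2)[OF fT TS]] by blast
    then show ?thesis by (rule Zc)
  qed
  show inj: "inj_on mlog T"
  proof (rule inj_onI, rule ccontr)
    fix a b assume a: "a \<in> T" and b: "b \<in> T" and e: "mlog a = mlog b" and ne: "a \<noteq> b"
    define c where "c g = (if g = a then 1 else if g = b then -1 else (0::int))" for g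
    have "(\<Sum>g\<in>T. msc (of_int (c g)) (mlog g)) = (\<Sum>g\<in>T. (if g = a then mlog a else 0) - (if g = b then mlog b else 0))"
      by (rule sum.cong) (auto simp: c_def ne)
    also have "\<dots> = 0" using a b fT e by (simp add: sum_subtractf)
    finally have "\<forall>g\<in>T. c g = 0" by (rule key)
    then have "c a = 0" using a by blast
    then show False by (simp add: c_def)
  qed
  show "VM.independent (mlog ` T)"
  proof
    assume "VM.dependent (mlog ` T)"
    then obtain x where x: "x \<in> mlog ` T" "x \<in> VM.span (mlog ` T - {x})"
      unfolding VM.dependent_def by blast
    then obtain a where a: "a \<in> T" "x = mlog a" by auto
    have "mlog ` T - {x} = mlog ` (T - {a})" using inj a by (auto simp: inj_on_def)
    then have "mlog a \<in> VM.span (mlog ` (T - {a}))" using x a by simp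
    then obtain m c where m: "m > (0::int)" "msc (of_int m) (mlog a) = (\<Sum>g\<in>T - {a}. msc (of_int (c g)) (mlog g))"
      using span_int[of "T - {a}"] fT by blast
    define c' where "c' g = (if g = a then - m else c g)" for g
    have "(\<Sum>g\<in>T. msc (of_int (c' g)) (mlog g)) = msc (of_int (c' a)) (mlog a) + (\<Sum>g\<in>T - {a}. msc (of_int (c' g)) (mlog g))"
      using a fT by (simp add: sum.remove)
    also have "\<dots> = - msc (of_int m) (mlog a) + (\<Sum>g\<in>T - {a}. msc (of_int (c g)) (mlog g))"
      by (simp add: c'_def)
    also have "\<dots> = 0" using m(2) by simp
    finally have "\<forall>g\<in>T. c' g = 0" by (rule key)
    then have "c' a = 0" using a by blast
    then show False using m(1) by (simp add: c'_def)
  qed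
qed

end


definition rmul :: "'a::{division_ring,ring_char_0}^'n \<Rightarrow> 'a \<Rightarrow> 'a^'n" where
  "rmul v c = (\<chi> i. v $ i * c)"

definition rspan :: "('a::{division_ring,ring_char_0}^'n) set \<Rightarrow> ('a^'n) set" where
  "rspan S = {\<Sum>v\<in>S. rmul v (c v) | c. True}"

lemma rmul_nth[simp]: "rmul v c $ i = v $ i * c" by (simp add: rmul_def)
lemma rmul_add_right: "rmul v (x + y) = rmul v x + rmul v y" by (simp add: vec_eq_iff distrib_left)
lemma rmul_add_left: "rmul (v + w) x = rmul v x + rmul w x" by (simp add: vec_eq_iff distrib_right)
lemma rmul_sum_left: "rmul (\<Sum>i\<in>I. f i) c = (\<Sum>i\<in>I. rmul (f i) c)"
  by (simp add: vec_eq_iff sum_distrib_right)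
lemma rmul_sum_right: "rmul v (\<Sum>i\<in>I. f i) = (\<Sum>i\<in>I. rmul v (f i))"
  by (simp add: vec_eq_iff sum_distrib_left)
lemma rmul_rmul: "rmul (rmul v x) y = rmul v (x * y)" by (simp add: vec_eq_iff mult.assoc)
lemma rmul_vsc: "vsc q (rmul v x) = rmul v (rat_scale q x)"
  by (simp add: vec_eq_iff rat_scale_cq) (metis cq_central mult.assoc)
lemma rmul_zero[simp]: "rmul v 0 = 0" "rmul 0 c = 0" by (simp_all add: vec_eq_iff)
lemma rmul_one[simp]: "rmul v 1 = v" by (simp add: vec_eq_iff)
lemma rmul_diff_right: "rmul v (x - y) = rmul v x - rmul v y" by (simp add: vec_eq_iff right_diff_distrib)
lemma rmul_neg: "rmul v (- x) = - rmul v x" by (simp add: vec_eq_iff)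
lemma mat_rmul: "M *v rmul v c = rmul (M *v v) c"
  by (simp add: vec_eq_iff matrix_vector_mult_def sum_distrib_right mult.assoc)
lemma mat_vsc: "M *v vsc q v = vsc q (M *v (v::'a::{division_ring,ring_char_0}^'n))"
proof -
  have "M $ i $ j * (cq q * v $ j) = cq q * (M $ i $ j * v $ j)" for i j
    by (metis cq_central mult.assoc)
  then show ?thesis by (simp add: vec_eq_iff matrix_vector_mult_def sum_distrib_left rat_scale_cq)
qed

lemma mat_vec_sum: "M *v (\<Sum>i\<in>I. f i) = (\<Sum>i\<in>I. M *v (f i :: 'a::semiring_1^'n))"
  by (induct I rule: infinite_finite_induct) (simp_all add: matrix_vector_right_distrib)

lemma right_indep_iff: "right_indep S \<longleftrightarrow> finite S \<and> (\<forall>c. (\<Sum>v\<in>S. rmul v (c v)) = 0 \<longrightarrow> (\<forall>v\<in>S. c v = 0))"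
  by (simp add: right_indep_def rmul_def)

lemma rspan_sum_in: "(\<Sum>v\<in>S. rmul v (c v)) \<in> rspan S" by (auto simp: rspan_def)

lemma rspan_subspace: "VV.subspace (rspan S)"
  unfolding VV.subspace_def
proof (intro conjI ballI allI)
  show "0 \<in> rspan S" using rspan_sum_in[where S = S and c = "\<lambda>_. 0"] by simp
next
  fix x y assume "x \<in> rspan S" "y \<in> rspan S"
  then obtain c d where "x = (\<Sum>v\<in>S. rmul v (c v))" "y = (\<Sum>v\<in>S. rmul v (d v))" by (auto simp: rspan_def)
  then have "x + y = (\<Sum>v\<in>S. rmul v (c v + d v))" by (simp add: rmul_add_right sum.distrib)
  then show "x + y \<in> rspan S" by (simp add: rspan_sum_in)
next
  fix q x assume "x \<in> rspan S"
  then obtain c where "x = (\<Sum>v\<in>S. rmul v (c v))" by (auto simp: rspan_def)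
  then have "vsc q x = (\<Sum>v\<in>S. rmul v (rat_scale q (c v)))" by (simp add: VV.scale_sum_right rmul_vsc)
  then show "vsc q x \<in> rspan S" by (simp add: rspan_sum_in)
qed

lemma rspan_base: "finite S \<Longrightarrow> v \<in> S \<Longrightarrow> rmul v b \<in> rspan S"
proof -
  assume "finite S" "v \<in> S"
  have "(\<Sum>w\<in>S. rmul w (if w = v then b else 0)) = (\<Sum>w\<in>S. if w = v then rmul w b else 0)"
    by (rule sum.cong) auto
  also have "\<dots> = rmul v b" using \<open>finite S\<close> \<open>v \<in> S\<close> by simp
  finally show ?thesis using rspan_sum_in[where S = S and c = "\<lambda>w. if w = v then b else 0"] by simp
qed

lemma rspan_rmul: "x \<in> rspan S \<Longrightarrow> rmul x b \<in> rspan S"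
proof -
  assume "x \<in> rspan S"
  then obtain c where "x = (\<Sum>v\<in>S. rmul v (c v))" by (auto simp: rspan_def)
  then have "rmul x b = (\<Sum>v\<in>S. rmul v (c v * b))" by (simp add: rmul_sum_left rmul_rmul)
  then show ?thesis by (simp add: rspan_sum_in)
qed

lemma mat_rspan_zero:
  assumes "\<forall>v\<in>S. M *v v = 0" "x \<in> rspan S"
  shows "M *v x = 0"
proof -
  obtain c where "x = (\<Sum>v\<in>S. rmul v (c v))" using assms(2) by (auto simp: rspan_def)
  then show ?thesis using assms(1) by (simp add: mat_vec_sum mat_rmul)
qed


definition FF :: "'a::{division_ring,ring_char_0} set \<Rightarrow> ('a^'n) set \<Rightarrow> ('a^'n) set" where
  "FF Bd S = (\<lambda>(v, b). rmul v b) ` (S \<times> Bd)"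

definition std :: "('a::{division_ring,ring_char_0}^'n) set" where
  "std = range (\<lambda>j. axis j 1)"

locale DB =
  fixes Bd :: "'a::{division_ring,ring_char_0} set"
  assumes Bd_ind: "VD.independent Bd" and Bd_span: "UNIV \<subseteq> VD.span Bd" and Bd_fin: "finite Bd"
begin

lemma Bd_nz: "b \<in> Bd \<Longrightarrow> b \<noteq> 0"
  using Bd_ind VD.dependent_zero by blast

lemma Bd_explicit: "(\<Sum>b\<in>Bd. rat_scale (u b) b) = 0 \<Longrightarrow> b \<in> Bd \<Longrightarrow> u b = 0"
  using Bd_ind Bd_fin unfolding VD.independent_explicit_finite_subsets by blast

lemma Bd_ne: "Bd \<noteq> {}"
proof
  assume "Bd = {}"
  moreover have "(1::'a) \<in> VD.span Bd" using Bd_span by blast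
  ultimately have "(1::'a) \<in> VD.span {}" by simp
  then have "(1::'a) = 0" by simp
  then show False by simp
qed

lemma Bd_card: "card Bd > 0" using Bd_ne Bd_fin by (simp add: card_gt_0_iff)

lemma rmul_in_span:
  assumes w: "w \<in> S"
  shows "rmul w x \<in> VV.span (FF Bd S)"
proof -
  have x: "x \<in> VD.span Bd" using Bd_span by auto
  show ?thesis
  proof (rule VD.span_induct[OF x, of "\<lambda>x. rmul w x \<in> VV.span (FF Bd S)"])
    show "VD.subspace {x. rmul w x \<in> VV.span (FF Bd S)}"
      unfolding VD.subspace_def
      by (auto simp: rmul_add_right VV.span_add VV.span_zero rmul_vsc[symmetric] VV.span_scale)
  next
    fix b assume "b \<in> Bd"
    then have "rmul w b \<in> FF Bd S" using w by (auto simp: FF_def)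
    then show "rmul w b \<in> VV.span (FF Bd S)" by (rule VV.span_base)
  qed
qed

lemma rspan_sub_span: "rspan S \<subseteq> VV.span (FF Bd S)"
proof
  fix x assume "x \<in> rspan S"
  then obtain c where "x = (\<Sum>v\<in>S. rmul v (c v))" by (auto simp: rspan_def)
  then show "x \<in> VV.span (FF Bd S)" by (auto intro!: VV.span_sum rmul_in_span)
qed

lemma span_sub_rspan: "finite S \<Longrightarrow> VV.span (FF Bd S) \<subseteq> rspan S"
  by (rule VV.span_minimal) (auto simp: FF_def rspan_base rspan_subspace)

lemma FF_finite: "finite S \<Longrightarrow> finite (FF Bd S)"
  using Bd_fin by (simp add: FF_def)

lemma FF_inj:
  assumes S: "right_indep S"
  shows "inj_on (\<lambda>(v, b). rmul v b) (S \<times> Bd)"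
proof (rule inj_onI, clarify)
  fix v b v' b' assume v: "v \<in> S" "b \<in> Bd" "v' \<in> S" "b' \<in> Bd" and e: "rmul v b = rmul v' b'"
  have fS: "finite S" using S by (simp add: right_indep_iff)
  have ind: "\<And>c. (\<Sum>v\<in>S. rmul v (c v)) = 0 \<Longrightarrow> \<forall>v\<in>S. c v = 0" using S by (simp add: right_indep_iff)
  show "v = v' \<and> b = b'"
  proof (cases "v = v'")
    case True
    define c where "c w = (if w = v then b - b' else 0)" for w
    have "(\<Sum>w\<in>S. rmul w (c w)) = (\<Sum>w\<in>S. if w = v then rmul v b - rmul v b' else 0)"
      by (rule sum.cong) (auto simp: c_def rmul_diff_right)
    also have "\<dots> = 0" using v fS e True by simp
    finally have "c v = 0" using ind v by blast
    then show ?thesis using True by (simp add: c_def)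
  next
    case False
    define c where "c w = (if w = v then b else if w = v' then - b' else 0)" for w
    have "(\<Sum>w\<in>S. rmul w (c w)) = (\<Sum>w\<in>S. (if w = v then rmul v b else 0) - (if w = v' then rmul v' b' else 0))"
      by (rule sum.cong) (auto simp: c_def rmul_neg False)
    also have "\<dots> = 0" using v fS e by (simp add: sum_subtractf)
    finally have "c v = 0" using ind v by blast
    then have "b = 0" by (simp add: c_def)
    then show ?thesis using Bd_nz v by blast
  qed
qed

lemma FF_card: "right_indep S \<Longrightarrow> card (FF Bd S) = card S * card Bd"
  unfolding FF_def by (simp add: card_image FF_inj card_cartesian_product)

lemma FF_indep:
  assumes S: "right_indep S"
  shows "VV.independent (FF Bd S)"
proof -
  have fS: "finite S" using S by (simp add: right_indep_iff)
  have ind: "\<And>c. (\<Sum>v\<in>S. rmul v (c v)) = 0 \<Longrightarrow> \<forall>v\<in>S. c v = 0" using S by (simp add: right_indep_iff)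
  show ?thesis
  proof (rule VV.independent_if_scalars_zero)
    show "finite (FF Bd S)" using fS by (rule FF_finite)
  next
    fix f x assume sum0: "(\<Sum>x\<in>FF Bd S. vsc (f x) x) = 0" and x: "x \<in> FF Bd S"
    have "(\<Sum>x\<in>FF Bd S. vsc (f x) x) = (\<Sum>p\<in>S \<times> Bd. vsc (f (rmul (fst p) (snd p))) (rmul (fst p) (snd p)))"
      unfolding FF_def by (subst sum.reindex[OF FF_inj[OF S]]) (simp add: split_beta)
    also have "\<dots> = (\<Sum>v\<in>S. \<Sum>b\<in>Bd. vsc (f (rmul v b)) (rmul v b))"
      by (simp add: sum.cartesian_product split_beta)
    also have "\<dots> = (\<Sum>v\<in>S. rmul v (\<Sum>b\<in>Bd. rat_scale (f (rmul v b)) b))"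
      by (simp add: rmul_sum_right rmul_vsc)
    finally have "\<forall>v\<in>S. (\<Sum>b\<in>Bd. rat_scale (f (rmul v b)) b) = 0"
      using sum0 ind[of "\<lambda>v. \<Sum>b\<in>Bd. rat_scale (f (rmul v b)) b"] by simp
    moreover obtain v b where "v \<in> S" "b \<in> Bd" "x = rmul v b" using x by (auto simp: FF_def)
    ultimately show "f x = 0" using Bd_explicit[of "\<lambda>b. f (rmul v b)"] by blast
  qed
qed

lemma std_indep: "right_indep (std :: ('a^'n) set)"
  unfolding right_indep_iff
proof (intro conjI allI impI ballI)
  show "finite (std :: ('a^'n) set)" by (simp add: std_def)
next
  fix c and v :: "'a^'n" assume s: "(\<Sum>v\<in>(std :: ('a^'n) set). rmul v (c v)) = 0" and v: "v \<in> std"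
  have inj: "inj (\<lambda>j::'n. axis j (1::'a))" by (auto simp: inj_def axis_eq_axis)
  have "(\<Sum>v\<in>(std :: ('a^'n) set). rmul v (c v)) = (\<Sum>j\<in>UNIV. rmul (axis j 1) (c (axis j 1)))"
    unfolding std_def by (simp add: sum.reindex[OF inj])
  also have "\<dots> = (\<chi> i. c (axis i 1))"
    by (simp add: vec_eq_iff axis_def if_distrib[of "\<lambda>x. x * _"] cong: if_cong)
  finally have "\<forall>i. c (axis i 1) = 0" using s by (simp add: vec_eq_iff)
  then show "c v = 0" using v by (auto simp: std_def)
qed

lemma std_card: "card (std :: ('a^'n) set) = CARD('n)"
proof -
  have inj: "inj (\<lambda>j::'n. axis j (1::'a))" by (auto simp: inj_def axis_eq_axis)
  then show ?thesis by (simp add: std_def card_image)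
qed

lemma std_rspan: "(x :: 'a^'n) \<in> rspan std"
proof -
  have inj: "inj (\<lambda>j::'n. axis j (1::'a))" by (auto simp: inj_def axis_eq_axis)
  define c where "c v = x $ (SOME j. v = axis j 1)" for v :: "'a^'n"
  have cj: "c (axis j 1) = x $ j" for j
  proof -
    have "(SOME i. axis j (1::'a) = axis i 1) = j"
      by (rule some_equality) (auto simp: axis_eq_axis)
    then show ?thesis by (simp add: c_def)
  qed
  have "(\<Sum>v\<in>(std :: ('a^'n) set). rmul v (c v)) = (\<Sum>j\<in>UNIV. rmul (axis j 1) (c (axis j 1)))"
    unfolding std_def by (simp add: sum.reindex[OF inj])
  also have "\<dots> = (\<Sum>j\<in>UNIV. rmul (axis j 1) (x $ j))" by (simp add: cj)
  also have "\<dots> = x"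
    by (simp add: vec_eq_iff axis_def if_distrib[of "\<lambda>x. x * _"] cong: if_cong)
  finally show ?thesis by (metis rspan_sum_in)
qed

lemma UNIV_span_std: "UNIV \<subseteq> VV.span (FF Bd (std :: ('a^'n) set))"
  using std_rspan rspan_sub_span by blast

lemma indep_bound:
  assumes "VV.independent (A :: ('a^'n) set)"
  shows "finite A \<and> card A \<le> CARD('n) * card Bd"
proof -
  have fstd: "finite (std :: ('a^'n) set)" by (simp add: std_def)
  have "finite A \<and> card A \<le> card (FF Bd (std :: ('a^'n) set))"
    by (rule VV.independent_span_bound[OF FF_finite[OF fstd] assms]) (use UNIV_span_std in blast)
  moreover have "card (std :: ('a^'n) set) = CARD('n)" by (rule std_card)
  moreover have "card (FF Bd (std :: ('a^'n) set)) = card (std :: ('a^'n) set) * card Bd" by (rule FF_card[OF std_indep])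
  ultimately show ?thesis by simp
qed

lemma rindep_card: "right_indep (S :: ('a^'n) set) \<Longrightarrow> card S \<le> CARD('n)"
  using indep_bound[OF FF_indep] FF_card Bd_card by (metis mult_le_cancel2)

lemma full_span:
  assumes A: "VV.independent (A :: ('a^'n) set)" and c: "card A = CARD('n) * card Bd"
  shows "UNIV \<subseteq> VV.span A"
proof
  fix x :: "'a^'n"
  show "x \<in> VV.span A"
  proof (rule ccontr)
    assume nx: "x \<notin> VV.span A"
    then have "VV.independent (insert x A)" using A by (rule VV.independent_insertI)
    moreover have "x \<notin> A" using nx VV.span_base by blast
    moreover have fA: "finite A" using indep_bound[OF A] by simp
    ultimately show False using indep_bound[of "insert x A"] c by simp
  qed
qed

lemma full_rspan:
  assumes B: "right_indep (B :: ('a^'n) set)" and c: "card B = CARD('n)"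
  shows "x \<in> rspan B"
proof -
  have fB: "finite B" using B by (simp add: right_indep_iff)
  have "x \<in> VV.span (FF Bd B)" using full_span[OF FF_indep[OF B]] FF_card[OF B] c by auto
  then show ?thesis using span_sub_rspan[OF fB] by blast
qed

lemma rindep_insert:
  assumes S: "right_indep S" and u: "u \<notin> rspan S"
  shows "right_indep (insert u S)"
proof -
  have fS: "finite S" using S by (simp add: right_indep_iff)
  have ind: "\<And>c. (\<Sum>v\<in>S. rmul v (c v)) = 0 \<Longrightarrow> \<forall>v\<in>S. c v = 0" using S by (simp add: right_indep_iff)
  have uS: "u \<notin> S" using u rspan_base[OF fS, of u 1] by auto
  show ?thesis unfolding right_indep_iff
  proof (intro conjI allI impI)
    show "finite (insert u S)" using fS by simp
  next
    fix c assume s: "(\<Sum>v\<in>insert u S. rmul v (c v)) = 0"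
    then have s': "rmul u (c u) + (\<Sum>v\<in>S. rmul v (c v)) = 0" using fS uS by simp
    have cu: "c u = 0"
    proof (rule ccontr)
      assume nz: "c u \<noteq> 0"
      have "rmul u (c u) = - (\<Sum>v\<in>S. rmul v (c v))" using s' by (simp add: eq_neg_iff_add_eq_0)
      then have "rmul (rmul u (c u)) (inverse (c u)) = rmul (- (\<Sum>v\<in>S. rmul v (c v))) (inverse (c u))" by simp
      then have "u = (\<Sum>v\<in>S. rmul v (- c v * inverse (c u)))"
        using nz by (simp add: rmul_rmul rmul_sum_left vec_eq_iff sum_negf sum_distrib_right mult.assoc)
      then have "u \<in> rspan S" using rspan_sum_in[where S = S and c = "\<lambda>v. - (c v * inverse (c u))"] by simp
      then show False using u by simp
    qed
    then have "(\<Sum>v\<in>S. rmul v (c v)) = 0" using s' by simp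
    then have "\<forall>v\<in>S. c v = 0" by (rule ind)
    then show "\<forall>v\<in>insert u S. c v = 0" using cu by simp
  qed
qed

lemma exists_outside:
  assumes S: "right_indep (S :: ('a^'n) set)" and c: "card S < CARD('n)"
  shows "\<exists>j. axis j 1 \<notin> rspan S"
proof (rule ccontr)
  assume "\<not> ?thesis"
  then have all: "axis j 1 \<in> rspan S" for j by blast
  have fS: "finite S" using S by (simp add: right_indep_iff)
  have "FF Bd (std :: ('a^'n) set) \<subseteq> VV.span (FF Bd S)"
  proof
    fix x assume "x \<in> FF Bd (std :: ('a^'n) set)"
    then obtain j b where "x = rmul (axis j 1) b" by (auto simp: FF_def std_def)
    then have "x \<in> rspan S" using rspan_rmul[OF all] by simp
    then show "x \<in> VV.span (FF Bd S)" using rspan_sub_span by blast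
  qed
  then have "card (FF Bd (std :: ('a^'n) set)) \<le> card (FF Bd S)"
    using VV.independent_span_bound[OF FF_finite[OF fS] FF_indep[OF std_indep]] by simp
  moreover have "card (std :: ('a^'n) set) = CARD('n)" by (rule std_card)
  moreover have "card (FF Bd (std :: ('a^'n) set)) = card (std :: ('a^'n) set) * card Bd" by (rule FF_card[OF std_indep])
  ultimately have "CARD('n) * card Bd \<le> card S * card Bd"
    using FF_card[OF S] by simp
  then show False using c Bd_card by simp
qed

lemma extend_basis:
  assumes "right_indep (S :: ('a^'n) set)"
  shows "\<exists>B. S \<subseteq> B \<and> right_indep B \<and> card B = CARD('n)"
proof -
  have "\<forall>S. right_indep (S :: ('a^'n) set) \<longrightarrow> CARD('n) - card S = k \<longrightarrow> (\<exists>B. S \<subseteq> B \<and> right_indep B \<and> card B = CARD('n))" for k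
  proof (induct k)
    case 0
    show ?case
    proof (intro allI impI)
      fix S :: "('a^'n) set" assume "right_indep S" "CARD('n) - card S = 0"
      then show "\<exists>B. S \<subseteq> B \<and> right_indep B \<and> card B = CARD('n)"
        using rindep_card[of S] by (auto intro!: exI[of _ S])
    qed
  next
    case (Suc k)
    show ?case
    proof (intro allI impI)
      fix S :: "('a^'n) set" assume S: "right_indep S" and k: "CARD('n) - card S = Suc k"
      then obtain j where j: "axis j 1 \<notin> rspan S" using exists_outside by fastforce
      have fS: "finite S" using S by (simp add: right_indep_iff)
      have jS: "axis j 1 \<notin> S" using j rspan_base[OF fS, of "axis j 1" 1] by auto
      have S': "right_indep (insert (axis j 1) S)" by (rule rindep_insert[OF S j])
      have "CARD('n) - card (insert (axis j 1) S) = k" using k fS jS by simp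
      then obtain B where "insert (axis j 1) S \<subseteq> B" "right_indep B" "card B = CARD('n)"
        using Suc S' by blast
      then show "\<exists>B. S \<subseteq> B \<and> right_indep B \<and> card B = CARD('n)" by blast
    qed
  qed
  then show ?thesis using assms by blast
qed

end


lemma mat_axis_col: "(M *v axis j 1) $ i = M $ i $ (j::'n::finite)" for M :: "'a::semiring_1^'n^'m"
  by (simp add: matrix_vector_mult_def axis_def if_distrib[of "\<lambda>x. _ * x"] cong: if_cong)

lemma mat_eq_vec: "(\<And>x. M *v x = N *v x) \<Longrightarrow> M = (N :: 'a::semiring_1^'n^'m)"
  by (metis mat_axis_col vec_eq_iff)

lemma mat_vec_zero: "(\<And>x. M *v x = 0) \<Longrightarrow> M = (0 :: 'a::semiring_1^'n^'m)"
  using mat_eq_vec[of M 0] by simp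

context DB begin

lemma inj_mat_indep:
  assumes inj: "\<And>x. M *v x = 0 \<Longrightarrow> x = (0::'a^'n)" and A: "VV.independent (A :: ('a^'n) set)"
  shows "VV.independent ((\<lambda>x. M *v x) ` A) \<and> card ((\<lambda>x. M *v x) ` A) = card A"
proof -
  have fA: "finite A" using indep_bound[OF A] by simp
  have injM: "inj_on (\<lambda>x. M *v x) A"
  proof (rule inj_onI)
    fix x y assume "M *v x = M *v y"
    then have "M *v (x - y) = 0" by (simp add: matrix_vector_mult_diff_distrib)
    then have "x - y = 0" using inj by blast
    then show "x = y" by simp
  qed
  have "VV.independent ((\<lambda>x. M *v x) ` A)"
  proof (rule VV.independent_if_scalars_zero)
    show "finite ((\<lambda>x. M *v x) ` A)" using fA by simp
  next
    fix f y assume s: "(\<Sum>y\<in>(\<lambda>x. M *v x) ` A. vsc (f y) y) = 0" and y: "y \<in> (\<lambda>x. M *v x) ` A"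
    have "(\<Sum>y\<in>(\<lambda>x. M *v x) ` A. vsc (f y) y) = (\<Sum>x\<in>A. vsc (f (M *v x)) (M *v x))"
      by (simp add: sum.reindex[OF injM])
    also have "\<dots> = M *v (\<Sum>x\<in>A. vsc (f (M *v x)) x)"
      by (simp add: mat_vec_sum mat_vsc)
    finally have "M *v (\<Sum>x\<in>A. vsc (f (M *v x)) x) = 0" using s by simp
    then have s0: "(\<Sum>x\<in>A. vsc (f (M *v x)) x) = 0" by (rule inj)
    have h: "\<And>u. (\<Sum>v\<in>A. vsc (u v) v) = 0 \<Longrightarrow> \<forall>v\<in>A. u v = 0"
      using A fA unfolding VV.independent_explicit_finite_subsets by blast
    have "\<forall>x\<in>A. f (M *v x) = 0" using h[of "\<lambda>x. f (M *v x)"] s0 by simp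
    then show "f y = 0" using y by blast
  qed
  then show ?thesis using injM by (simp add: card_image)
qed

end

locale DBP = DB Bd for Bd :: "'a::{division_ring,ring_char_0} set" +
  fixes B :: "('a^'n) set" and g :: "'n \<Rightarrow> 'a^'n"
  assumes B_ind: "right_indep B" and B_card: "card B = CARD('n)" and g_bij: "bij_betw g UNIV B"
begin

definition P :: "'a^'n^'n" where "P = (\<chi> i k. g k $ i)"

lemma P_vec: "P *v x = (\<Sum>k\<in>UNIV. rmul (g k) (x $ k))"
  by (simp add: P_def vec_eq_iff matrix_vector_mult_def)

lemma P_axis: "P *v axis k 1 = g k"
  by (simp add: vec_eq_iff mat_axis_col P_def)

lemma P_surj: "\<exists>x. P *v x = y"
proof -
  have "y \<in> rspan B" by (rule full_rspan[OF B_ind B_card])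
  then obtain c where y: "y = (\<Sum>v\<in>B. rmul v (c v))" by (auto simp: rspan_def)
  have "(\<Sum>v\<in>B. rmul v (c v)) = (\<Sum>k\<in>UNIV. rmul (g k) (c (g k)))"
    using sum.reindex_bij_betw[OF g_bij, of "\<lambda>v. rmul v (c v)"] by simp
  also have "\<dots> = P *v (\<chi> k. c (g k))" by (simp add: P_vec)
  finally show ?thesis using y by metis
qed

definition Q :: "'a^'n^'n" where "Q = (\<chi> i j. (SOME x. P *v x = axis j 1) $ i)"

lemma PQ: "P ** Q = mat 1"
proof -
  have q: "P *v (SOME x. P *v x = axis j 1) = axis j 1" for j
    using someI_ex[OF P_surj[of "axis j 1"]] .
  have "(P ** Q) $ i $ j = (P *v (SOME x. P *v x = axis j 1)) $ i" for i j
    by (simp add: matrix_matrix_mult_def matrix_vector_mult_def Q_def)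
  then show ?thesis using q by (simp add: vec_eq_iff mat_def axis_def)
qed

lemma Q_inj: "Q *v x = 0 \<Longrightarrow> x = 0"
proof -
  assume "Q *v x = 0"
  then have "P *v (Q *v x) = 0" by simp
  then show "x = 0" by (simp add: matrix_vector_mul_assoc PQ)
qed

lemma Q_surj: "\<exists>x. Q *v x = y"
proof -
  let ?A = "(\<lambda>x. Q *v x) ` FF Bd (std :: ('a^'n) set)"
  have "VV.independent ?A \<and> card ?A = card (FF Bd (std :: ('a^'n) set))"
    by (rule inj_mat_indep[OF Q_inj FF_indep[OF std_indep]])
  moreover have "card (std :: ('a^'n) set) = CARD('n)" by (rule std_card)
  moreover have "card (FF Bd (std :: ('a^'n) set)) = card (std :: ('a^'n) set) * card Bd" by (rule FF_card[OF std_indep])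
  ultimately have "UNIV \<subseteq> VV.span ?A" by (intro full_span) auto
  moreover have "VV.span ?A \<subseteq> range (\<lambda>x. Q *v x)"
  proof (rule VV.span_minimal)
    show "?A \<subseteq> range (\<lambda>x. Q *v x)" by auto
    show "VV.subspace (range (\<lambda>x. Q *v x))"
      unfolding VV.subspace_def
    proof (intro conjI ballI allI)
      show "0 \<in> range (\<lambda>x. Q *v x)" by (metis matrix_vector_mult_0_right rangeI)
    next
      fix x y assume "x \<in> range (\<lambda>x. Q *v x)" "y \<in> range (\<lambda>x. Q *v x)"
      then obtain a b where "x = Q *v a" "y = Q *v b" by auto
      then have "x + y = Q *v (a + b)" by (simp add: matrix_vector_right_distrib)
      then show "x + y \<in> range (\<lambda>x. Q *v x)" by auto
    next
      fix c x assume "x \<in> range (\<lambda>x. Q *v x)"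
      then obtain a where "x = Q *v a" by auto
      then have "vsc c x = Q *v vsc c a" by (simp add: mat_vsc)
      then show "vsc c x \<in> range (\<lambda>x. Q *v x)" by auto
    qed
  qed
  ultimately have "y \<in> range (\<lambda>x. Q *v x)" by (meson UNIV_I subsetD)
  then obtain x where "y = Q *v x" by (rule rangeE)
  then show ?thesis by (rule exI[where x = x, OF sym])
qed

lemma QP: "Q ** P = mat 1"
proof (rule mat_eq_vec)
  fix y
  obtain x where x: "Q *v x = y" using Q_surj by blast
  have "(Q ** P) *v y = Q *v (P *v (Q *v x))" using x by (simp add: matrix_vector_mul_assoc)
  also have "\<dots> = Q *v x" by (simp add: matrix_vector_mul_assoc PQ)
  finally show "(Q ** P) *v y = mat 1 *v y" using x by simp
qed

lemma Q_g: "Q *v g k = axis k 1"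
proof -
  have "Q *v g k = Q *v (P *v axis k 1)" by (simp only: P_axis)
  also have "\<dots> = axis k 1" by (simp only: matrix_vector_mul_assoc QP matrix_vector_mul_lid)
  finally show ?thesis .
qed

end


lemma axis2_add: "axis i (axis k (x + y)) = axis i (axis k x) + (axis i (axis k y) :: 'a::monoid_add^'n^'m)"
  by (simp add: vec_eq_iff axis_def)

lemma axis2_msc: "msc q (axis i (axis k x)) = axis i (axis k (rat_scale q x))"
  by (simp add: vec_eq_iff axis_def rat_scale_cq)

lemma axis2_zero: "axis i (axis k 0) = (0 :: 'a::zero^'n^'m)"
  by (simp add: vec_eq_iff axis_def)

lemma axis2_nth: "axis i (axis k x) $ r $ c = (if r = i \<and> c = k then x else 0)"
  by (simp add: axis_def)

context DBP begin

definition G2 :: "'n set \<Rightarrow> ('a^'n^'n) set" where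
  "G2 K = (\<lambda>(i, k, b). axis i (axis k b)) ` (UNIV \<times> K \<times> Bd)"

lemma G2_card: "card (G2 K) \<le> CARD('n) * card K * card Bd"
  unfolding G2_def
  by (rule order.trans[OF card_image_le]) (simp_all add: Bd_fin card_cartesian_product)

lemma G2_finite: "finite (G2 K)"
  using Bd_fin by (simp add: G2_def)

lemma axis2_span:
  assumes k: "k \<in> K"
  shows "axis i (axis k x) \<in> VM.span (G2 K)"
proof -
  have x: "x \<in> VD.span Bd" using Bd_span by auto
  show ?thesis
  proof (rule VD.span_induct[OF x, of "\<lambda>x. axis i (axis k x) \<in> VM.span (G2 K)"])
    show "VD.subspace {x. axis i (axis k x) \<in> VM.span (G2 K)}"
      unfolding VD.subspace_def
      by (auto simp: axis2_add axis2_zero axis2_msc[symmetric] VM.span_add VM.span_zero VM.span_scale)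
  next
    fix b assume "b \<in> Bd"
    have "axis i (axis k b) \<in> G2 K" unfolding G2_def
      by (rule image_eqI[where x = "(i, k, b)"]) (use k \<open>b \<in> Bd\<close> in auto)
    then show "axis i (axis k b) \<in> VM.span (G2 K)" by (rule VM.span_base)
  qed
qed

lemma col_span:
  assumes Y: "\<And>i k. k \<notin> K \<Longrightarrow> Y $ i $ k = 0"
  shows "Y \<in> VM.span (G2 K)"
proof -
  have "Y = (\<Sum>i\<in>UNIV. \<Sum>k\<in>K. axis i (axis k (Y $ i $ k)))"
  proof (simp add: vec_eq_iff axis2_nth, intro allI)
    fix r c
    have fK: "finite K" by simp
    have "(\<Sum>i\<in>UNIV. \<Sum>k\<in>K. if r = i \<and> c = k then Y $ i $ k else 0) =
        (\<Sum>i\<in>UNIV. if r = i then (\<Sum>k\<in>K. if c = k then Y $ i $ k else 0) else 0)"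
      by (rule sum.cong[OF refl]) auto
    also have "\<dots> = (\<Sum>k\<in>K. if c = k then Y $ r $ k else 0)" by simp
    also have "\<dots> = (if c \<in> K then Y $ r $ c else 0)" using fK by (rule sum.delta')
    also have "\<dots> = Y $ r $ c" using Y by auto
    finally show "Y $ r $ c = (\<Sum>i\<in>UNIV. \<Sum>k\<in>K. if r = i \<and> c = k then Y $ i $ k else 0)" by simp
  qed
  also have "\<dots> \<in> VM.span (G2 K)"
    by (intro VM.span_sum axis2_span)
  finally show ?thesis .
qed

lemma psi_hom: "module_hom msc msc (\<lambda>X::'a^'n^'n. X ** P)"
  unfolding module_hom_iff
  by (simp add: VM.module_axioms matrix_add_rdistrib msc_mult_left)

lemma psi_inj: "inj (\<lambda>X::'a^'n^'n. X ** P)"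
proof (rule injI)
  fix X Y :: "'a^'n^'n" assume "X ** P = Y ** P"
  then have "X ** P ** Q = Y ** P ** Q" by simp
  then show "X = Y" by (simp add: matrix_mul_assoc[symmetric] PQ)
qed

lemma W_bound:
  assumes S0: "S0 \<subseteq> B" and A: "VM.independent (A :: ('a^'n^'n) set)" and AW: "\<And>X v. X \<in> A \<Longrightarrow> v \<in> S0 \<Longrightarrow> X *v v = 0"
  shows "card A \<le> CARD('n) * (CARD('n) - card S0) * card Bd"
proof -
  define K where "K = {k. g k \<notin> S0}"
  have bJ: "bij_betw g {k. g k \<in> S0} S0"
    using g_bij S0 unfolding bij_betw_def by (auto simp: inj_on_def image_iff)
  have cJ: "card {k. g k \<in> S0} = card S0" using bij_betw_same_card[OF bJ] .
  have "card K = CARD('n) - card {k. g k \<in> S0}"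
  proof -
    have "K = UNIV - {k. g k \<in> S0}" by (auto simp: K_def)
    then show ?thesis by (simp add: card_Diff_subset)
  qed
  then have cK: "card K = CARD('n) - card S0" using cJ by simp
  let ?A = "(\<lambda>X. X ** P) ` A"
  have indA: "VM.independent ?A"
    by (rule module_hom.independent_inj_image[OF psi_hom A psi_inj])
  have cA: "card ?A = card A" using psi_inj by (simp add: card_image inj_on_subset)
  have "?A \<subseteq> VM.span (G2 K)"
  proof
    fix Y assume "Y \<in> ?A"
    then obtain X where X: "X \<in> A" "Y = X ** P" by auto
    show "Y \<in> VM.span (G2 K)"
    proof (rule col_span)
      fix i k assume "k \<notin> K"
      then have "g k \<in> S0" by (simp add: K_def)
      then have "X *v g k = 0" using AW X by blast
      moreover have "(X ** P) $ i $ k = (X *v g k) $ i"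
        by (simp add: matrix_matrix_mult_def matrix_vector_mult_def P_def)
      ultimately show "Y $ i $ k = 0" using X by simp
    qed
  qed
  then have "card ?A \<le> card (G2 K)"
    using VM.independent_span_bound[OF G2_finite indA] by simp
  then show ?thesis using G2_card[of K] cA cK by simp
qed

end


context DBP begin

definition E0 :: "'n \<Rightarrow> 'a^'n^'n" where "E0 k0 = axis k0 (axis k0 1)"
definition X0 :: "'n \<Rightarrow> 'a^'n^'n" where "X0 k0 = P ** E0 k0 ** Q"

lemma X0_kill: "k \<noteq> k0 \<Longrightarrow> X0 k0 *v g k = 0"
proof -
  assume k: "k \<noteq> k0"
  have "E0 k0 *v axis k 1 = 0"
    using k by (simp add: vec_eq_iff mat_axis_col E0_def axis2_nth)
  then show ?thesis
    by (simp add: X0_def matrix_vector_mul_assoc[symmetric] Q_g)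
qed

lemma E0_idem: "E0 k0 ** E0 k0 = E0 k0"
  by (simp add: vec_eq_iff matrix_matrix_mult_def E0_def axis2_nth if_distrib[of "\<lambda>x. x * _"] cong: if_cong)

lemma X0_idem: "X0 k0 ** X0 k0 = X0 k0"
proof -
  have "X0 k0 ** X0 k0 = P ** E0 k0 ** (Q ** P) ** E0 k0 ** Q"
    by (simp add: X0_def matrix_mul_assoc)
  also have "\<dots> = P ** (E0 k0 ** E0 k0) ** Q" by (simp add: QP matrix_mul_assoc)
  finally show ?thesis by (simp add: E0_idem X0_def)
qed

lemma X0_nz: "X0 k0 \<noteq> 0"
proof
  assume "X0 k0 = 0"
  then have "Q ** X0 k0 ** P = 0" by simp
  moreover have "Q ** X0 k0 ** P = E0 k0"
    by (simp add: X0_def matrix_mul_assoc QP) (simp add: matrix_mul_assoc[symmetric] QP)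
  ultimately have "E0 k0 = 0" by simp
  then have "E0 k0 $ k0 $ k0 = 0" by simp
  then show False by (simp add: E0_def)
qed

lemma X0_not_nil: "mpow (X0 k0) M \<noteq> 0"
proof (cases M)
  case 0
  have "(mat 1 :: 'a^'n^'n) $ k0 $ k0 = 1" by (simp add: mat_def)
  then show ?thesis using 0 by auto
next
  case (Suc m)
  have "mpow (X0 k0) (Suc m) = X0 k0"
  proof (induct m)
    case 0 then show ?case by (simp add: mpow_Suc)
  next
    case (Suc m) then show ?case by (simp add: mpow_Suc X0_idem)
  qed
  then show ?thesis using Suc X0_nz by simp
qed

end


lemma right_indep_empty: "right_indep {}"
  by (simp add: right_indep_def)

lemma Z_indep_empty: "Z_indep G {}"
  by (simp add: Z_indep_def)

theorem lemma5p26: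
  fixes \<Sigma> :: "('a::{division_ring,ring_char_0}^'n^'n) set"
  assumes fd: "fin_dim_over_Q TYPE('a)"
    and sub: "subgroup \<Sigma> GL"
    and ab: "\<forall>A\<in>\<Sigma>. \<forall>B\<in>\<Sigma>. A ** B = B ** A"
    and fg: "\<exists>X. finite X \<and> X \<subseteq> \<Sigma> \<and> generate GL X = \<Sigma>"
    and nontriv: "\<Sigma> \<noteq> {mat 1}"
    and unip: "\<forall>A\<in>\<Sigma>. unipotent_mat A"
  shows "rank_Z (GL\<lparr>carrier := \<Sigma>\<rparr>)
     < CARD('n) * (CARD('n) - right_dim {v. \<forall>A\<in>\<Sigma>. (A - mat 1) *v v = 0})
         * degree_over_Q TYPE('a)"
proof -
  interpret SG \<Sigma> by (rule SG.intro[OF sub ab unip])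
  define kk where "kk = {v. \<forall>A\<in>\<Sigma>. (A - mat 1) *v v = (0 :: 'a^'n)}"
  obtain Bf :: "'a set" where Bf: "finite Bf" "VD.span Bf = UNIV"
    using fd by (auto simp: fin_dim_over_Q_def)
  obtain Bd :: "'a set" where Bd: "VD.independent Bd" "UNIV \<subseteq> VD.span Bd" "card Bd = VD.dim (UNIV :: 'a set)"
    using VD.basis_exists[of UNIV] by blast
  have fBd: "finite Bd" using VD.independent_span_bound[OF Bf(1) Bd(1)] Bf(2) by simp
  interpret DB Bd using Bd fBd by unfold_locales
  have dQ: "degree_over_Q TYPE('a) = card Bd" using Bd(3) by (simp add: degree_over_Q_def)
  define R where "R = {card S | S. S \<subseteq> kk \<and> right_indep S}"
  have R_fin: "finite R"
  proof (rule finite_subset[of _ "{..CARD('n)}"])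
    show "R \<subseteq> {..CARD('n)}" using rindep_card by (auto simp: R_def)
  qed simp
  have R_ne: "R \<noteq> {}" using right_indep_empty by (auto simp: R_def)
  have "right_dim kk = Max R" by (simp add: right_dim_def R_def[symmetric] cSup_eq_Max[OF R_fin R_ne])
  then have "right_dim kk \<in> R" using Max_in[OF R_fin R_ne] by simp
  then obtain S0 where S0: "S0 \<subseteq> kk" "right_indep S0" "card S0 = right_dim kk" by (auto simp: R_def)
  obtain B where B: "S0 \<subseteq> B" "right_indep B" "card B = CARD('n)" using extend_basis[OF S0(2)] by blast
  have fB: "finite B" using B(2) by (simp add: right_indep_iff)
  obtain g where g: "bij_betw g (UNIV :: 'n set) B"
    using finite_same_card_bij[of "UNIV :: 'n set" B] fB B(3) by auto
  interpret DBP Bd B g using B(2,3) g by unfold_locales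
  have fS0: "finite S0" using S0(2) by (simp add: right_indep_iff)
  have "S0 \<noteq> B"
  proof
    assume e: "S0 = B"
    have "A = mat 1" if A: "A \<in> \<Sigma>" for A
    proof -
      have "(A - mat 1) *v x = 0" for x
        using mat_rspan_zero[of S0 "A - mat 1" x] full_rspan[OF B(2) B(3), of x] e S0(1) A by (auto simp: kk_def)
      then have "A - mat 1 = 0" by (rule mat_vec_zero)
      then show ?thesis by simp
    qed
    then have "\<Sigma> = {mat 1}" using one_S by blast
    then show False using nontriv by simp
  qed
  then obtain k0 where k0: "g k0 \<notin> S0"
    using B(1) g by (metis bij_betw_imp_surj_on imageE subsetI subset_antisym)
  have cS0: "card S0 < CARD('n)"
    using \<open>S0 \<noteq> B\<close> B fB by (metis card_subset_eq le_neq_implies_less card_mono)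
  define bound where "bound = CARD('n) * (CARD('n) - card S0) * card Bd"
  have main: "card T + 1 \<le> bound" if T: "Z_indep G T" for T
  proof -
    have fT: "finite T" and TS: "T \<subseteq> \<Sigma>" using T by (auto simp: Z_indep_def)
    note Zi = Zindep_imp[OF T]
    have nsp: "X0 k0 \<notin> VM.span (mlog ` T)"
    proof
      assume "X0 k0 \<in> VM.span (mlog ` T)"
      then obtain M where "mpow (X0 k0) M = 0" using span_nil[OF fT TS] by blast
      then show False using X0_not_nil by blast
    qed
    have indA: "VM.independent (insert (X0 k0) (mlog ` T))"
      by (rule VM.independent_insertI[OF nsp Zi(2)])
    have nin: "X0 k0 \<notin> mlog ` T" using nsp VM.span_base by blast
    have cA: "card (insert (X0 k0) (mlog ` T)) = card T + 1"
      using nin fT Zi(1) by (simp add: card_image)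
    have "card (insert (X0 k0) (mlog ` T)) \<le> bound"
      unfolding bound_def
    proof (rule W_bound[OF B(1) indA])
      fix X v assume X: "X \<in> insert (X0 k0) (mlog ` T)" and v: "v \<in> S0"
      show "X *v v = 0"
      proof (cases "X = X0 k0")
        case True
        obtain k where k: "v = g k" using v B(1) g by (metis bij_betw_imp_surj_on imageE subsetD)
        then have "k \<noteq> k0" using v k0 by auto
        then show ?thesis using True k X0_kill by simp
      next
        case False
        then obtain a where a: "a \<in> T" "X = mlog a" using X by auto
        have aS: "a \<in> \<Sigma>" using a TS by auto
        obtain M where M: "mpow (a - mat 1) M = 0" using S_nil[OF aS] by blast
        have "(a - mat 1) *v v = 0" using v S0(1) aS by (auto simp: kk_def)
        then show ?thesis using mlog_kills[OF M] a by simp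
      qed
    qed
    then show ?thesis using cA by simp
  qed
  have "rank_Z G \<le> bound - 1"
    unfolding rank_Z_def
  proof (rule cSup_least)
    show "{card S |S. Z_indep G S} \<noteq> {}" using Z_indep_empty by blast
  next
    fix x assume "x \<in> {card S |S. Z_indep G S}"
    then show "x \<le> bound - 1" using main by fastforce
  qed
  moreover have "1 \<le> bound" using main[OF Z_indep_empty] by simp
  ultimately have "rank_Z G < bound" by simp
  then show ?thesis using S0(3) dQ by (simp add: bound_def kk_def)
qed


end
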